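(* Let $\xi(t)$, $t\in[t_a,t_b]$, be a Markov diffusion process in $\mathbb{R}^3$ with forward and backward mean velocities $b_\pm$ and density $\rho$ as in the context. Then the relative entropies of the forward and backward path densities satisfy $$H(\rho_+\|\rho_-) = H_b - H_a - \frac12\int_{t_a}^{t_b} E\big[\nabla_i(b_+^i+b_-^i)\big]\,dt,$$ $$H(\rho_-\|\rho_+) = H_a - H_b + \frac12\int_{t_a}^{t_b} E\big[\nabla_i(b_+^i+b_-^i)\big]\,dt,$$ where $H_a=-\int\rho(\mathbf{x},t_a)\ln\rho(\mathbf{x},t_a)\,d\mathbf{x}$, $H_b=-\int\rho(\mathbf{x},t_b)\ln\rho(\mathbf{x},t_b)\,d\mathbf{x}$ and summation over the repeated index $i$ is implied.
   Context: $\xi(t)$ is a Markov diffusion process in $\mathbb{R}^3$ with $d\xi^i=b_+^i(\xi,t)dt+dW_+^i$ and $d\xi^i=b_-^i(\xi,t)dt+dW_-^i$, where $W_\pm$ are Wiener-type processes with $E[dW_\pm^i dW_\pm^j]=2\nu\delta^{ij}dt$, $dW_+$ independent of the past and $dW_-$ independent of the future. $\rho(\mathbf{x},t)$ is the density of $\xi(t)$, assumed smooth with enough decay for integrations by parts (boundary terms vanish). The forward/backward derivatives $D_\pm F(t)=\lim_{dt\to0^+}E_t[\pm(F(t\pm dt)-F(t))/dt]$ ($E_t$ conditional expectation given $\xi(t)$) act on $f(\xi(t),t)$ as $D_\pm f=(\partial_t+b_\pm^i\nabla_i\pm\nu\Delta)f$, and the identity $b_+^i-b_-^i=2\nu\nabla^i\ln\rho$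 holds. $E[\cdot]$ is absolute expectation at time $t$. Path densities: for a partition $t_1=t_a<\dots<t_n=t_b$ with positions $\mathbf{x}_1,\dots,\mathbf{x}_n$, $\rho_+=\rho(\mathbf{x}_1)\prod_{i=1}^{n-1}p(\mathbf{x}_{i+1}|\mathbf{x}_i)$ and $\rho_-=\rho(\mathbf{x}_n)\prod_{i=1}^{n-1}p(\mathbf{x}_i|\mathbf{x}_{i+1})$ with $p(\mathbf{x}_i|\mathbf{x}_{i+1})$ given by Bayes' theorem; $H(\rho_+\|\rho_-)=\int\rho_+\ln(\rho_+/\rho_-)$, $H(\rho_-\|\rho_+)=\int\rho_-\ln(\rho_-/\rho_+)$ (integrals over all $\mathbf{x}_1,\dots,\mathbf{x}_n$), in the limit of vanishing time step. *)

theory Defs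
  imports "HOL-Analysis.Analysis" "HOL-Probability.Probability"
begin

type_synonym pt = "real ^ 3"

definition pd :: "3 \<Rightarrow> (pt \<Rightarrow> real) \<Rightarrow> pt \<Rightarrow> real" where
  "pd i g x = frechet_derivative g (at x) (axis i 1)"

definition tder :: "real set \<Rightarrow> (pt \<Rightarrow> real \<Rightarrow> real) \<Rightarrow> pt \<Rightarrow> real \<Rightarrow> real" where
  "tder T f x t = (SOME d. ((\<lambda>s. f x s) has_real_derivative d) (at t within T))"

definition lap :: "(pt \<Rightarrow> real) \<Rightarrow> pt \<Rightarrow> real" where
  "lap g x = (\<Sum>i\<in>UNIV. pd i (\<lambda>y. pd i g y) x)"

definition divg :: "(pt \<Rightarrow> real \<Rightarrow> pt) \<Rightarrow> pt \<Rightarrow> real \<Rightarrow> real" where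
  "divg b x t = (\<Sum>i\<in>UNIV. pd i (\<lambda>y. b y t $ i) x)"

definition C1x :: "real set \<Rightarrow> (pt \<Rightarrow> real \<Rightarrow> real) \<Rightarrow> bool" where
  "C1x T f \<longleftrightarrow>
     continuous_on (UNIV \<times> T) (\<lambda>(x,t). f x t) \<and>
     (\<forall>t\<in>T. \<forall>x. (\<lambda>y. f y t) differentiable (at x)) \<and>
     (\<forall>i. continuous_on (UNIV \<times> T) (\<lambda>(x,t). pd i (\<lambda>y. f y t) x))"

definition C21 :: "real set \<Rightarrow> (pt \<Rightarrow> real \<Rightarrow> real) \<Rightarrow> bool" where
  "C21 T f \<longleftrightarrow>
     C1x T f \<and>
     (\<forall>i. \<forall>t\<in>T. \<forall>x. (\<lambda>y. pd i (\<lambda>z. f z t) y) differentiable (at x)) \<and>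
     (\<forall>i j. continuous_on (UNIV \<times> T) (\<lambda>(x,t). pd j (\<lambda>y. pd i (\<lambda>z. f z t) y) x)) \<and>
     (\<forall>x. \<forall>t\<in>T. \<exists>d. ((\<lambda>s. f x s) has_real_derivative d) (at t within T)) \<and>
     continuous_on (UNIV \<times> T) (\<lambda>(x,t). tder T f x t)"

definition test_fun :: "real set \<Rightarrow> (pt \<Rightarrow> real \<Rightarrow> real) \<Rightarrow> bool" where
  "test_fun T f \<longleftrightarrow> C21 T f \<and> (\<exists>K. compact K \<and> (\<forall>x. \<forall>t\<in>T. x \<notin> K \<longrightarrow> f x t = 0))"

text \<open>The operator (d_t + b^i nabla_i + s nu Delta) f, s = +1 (forward) or -1 (backward).\<close>
definition gen :: "real set \<Rightarrow> real \<Rightarrow> real \<Rightarrow> (pt \<Rightarrow> real \<Rightarrow> pt) \<Rightarrow> (pt \<Rightarrow> real \<Rightarrow> real)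
                   \<Rightarrow> pt \<Rightarrow> real \<Rightarrow> real" where
  "gen T s \<nu> b f x t = tder T f x t + (\<Sum>i\<in>UNIV. b x t $ i * pd i (\<lambda>y. f y t) x)
                        + s * \<nu> * lap (\<lambda>y. f y t) x"

text \<open>Transition density p s x t y = density of xi(t) at y given xi(s) = x (s < t).
  Backward transition density by Bayes: density of xi(s) at x given xi(t) = y.\<close>
definition pback :: "(pt \<Rightarrow> real \<Rightarrow> real) \<Rightarrow> (real \<Rightarrow> pt \<Rightarrow> real \<Rightarrow> pt \<Rightarrow> real)
                     \<Rightarrow> real \<Rightarrow> pt \<Rightarrow> real \<Rightarrow> pt \<Rightarrow> real" where
  "pback \<rho> p s x t y = p s x t y * \<rho> x s / \<rho> y t"

text \<open>E_t[f(xi(t+dt),t+dt)] given xi(t) = x.\<close>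
definition condF :: "(real \<Rightarrow> pt \<Rightarrow> real \<Rightarrow> pt \<Rightarrow> real) \<Rightarrow> (pt \<Rightarrow> real \<Rightarrow> real)
                     \<Rightarrow> real \<Rightarrow> real \<Rightarrow> pt \<Rightarrow> real" where
  "condF p f t dt x = (\<integral>y. f y (t + dt) * p t x (t + dt) y \<partial>lborel)"

text \<open>E_t[f(xi(t-dt),t-dt)] given xi(t) = x.\<close>
definition condB :: "(pt \<Rightarrow> real \<Rightarrow> real) \<Rightarrow> (real \<Rightarrow> pt \<Rightarrow> real \<Rightarrow> pt \<Rightarrow> real)
                     \<Rightarrow> (pt \<Rightarrow> real \<Rightarrow> real) \<Rightarrow> real \<Rightarrow> real \<Rightarrow> pt \<Rightarrow> real" where
  "condB \<rho> p f t dt x = (\<integral>y. f y (t - dt) * pback \<rho> p (t - dt) y t x \<partial>lborel)"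

definition is_partition :: "real \<Rightarrow> real \<Rightarrow> nat \<Rightarrow> (nat \<Rightarrow> real) \<Rightarrow> bool" where
  "is_partition ta tb n ts \<longleftrightarrow> 2 \<le> n \<and> ts 0 = ta \<and> ts (n - 1) = tb \<and>
      (\<forall>i. Suc i < n \<longrightarrow> ts i < ts (Suc i))"

definition mesh :: "nat \<Rightarrow> (nat \<Rightarrow> real) \<Rightarrow> real" where
  "mesh n ts = Max ((\<lambda>i. ts (Suc i) - ts i) ` {..<n - 1})"

definition rho_plus :: "(pt \<Rightarrow> real \<Rightarrow> real) \<Rightarrow> (real \<Rightarrow> pt \<Rightarrow> real \<Rightarrow> pt \<Rightarrow> real)
                        \<Rightarrow> nat \<Rightarrow> (nat \<Rightarrow> real) \<Rightarrow> (nat \<Rightarrow> pt) \<Rightarrow> real" where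
  "rho_plus \<rho> p n ts xs = \<rho> (xs 0) (ts 0) *
      (\<Prod>i<n - 1. p (ts i) (xs i) (ts (Suc i)) (xs (Suc i)))"

definition rho_minus :: "(pt \<Rightarrow> real \<Rightarrow> real) \<Rightarrow> (real \<Rightarrow> pt \<Rightarrow> real \<Rightarrow> pt \<Rightarrow> real)
                        \<Rightarrow> nat \<Rightarrow> (nat \<Rightarrow> real) \<Rightarrow> (nat \<Rightarrow> pt) \<Rightarrow> real" where
  "rho_minus \<rho> p n ts xs = \<rho> (xs (n - 1)) (ts (n - 1)) *
      (\<Prod>i<n - 1. pback \<rho> p (ts i) (xs i) (ts (Suc i)) (xs (Suc i)))"

definition rel_ent :: "nat \<Rightarrow> ((nat \<Rightarrow> pt) \<Rightarrow> real) \<Rightarrow> ((nat \<Rightarrow> pt) \<Rightarrow> real) \<Rightarrow> real" where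
  "rel_ent n f g = (\<integral>xs. f xs * ln (f xs / g xs) \<partial>(PiM {..<n} (\<lambda>_. (lborel :: pt measure))))"

definition mesh_limit :: "real \<Rightarrow> real \<Rightarrow> (nat \<Rightarrow> (nat \<Rightarrow> real) \<Rightarrow> real) \<Rightarrow> real \<Rightarrow> bool" where
  "mesh_limit ta tb F L \<longleftrightarrow>
     (\<forall>\<epsilon>>0. \<exists>\<delta>>0. \<forall>n ts. is_partition ta tb n ts \<and> mesh n ts < \<delta> \<longrightarrow> \<bar>F n ts - L\<bar> < \<epsilon>)"

definition entropy_at :: "(pt \<Rightarrow> real \<Rightarrow> real) \<Rightarrow> real \<Rightarrow> real" where
  "entropy_at \<rho> t = - (\<integral>x. \<rho> x t * ln (\<rho> x t) \<partial>lborel)"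

end

theory Submission
  imports Defs
begin



lemma partition_range:
  assumes "is_partition ta tb n ts" "i < n"
  shows "ta \<le> ts i \<and> ts i \<le> tb"
proof -
  have mono: "ts j \<le> ts k" if "j \<le> k" "k < n" for j k
    using that
  proof (induction k)
    case 0 then show ?case by simp
  next
    case (Suc k)
    show ?case
    proof (cases "j = Suc k")
      case True then show ?thesis by simp
    next
      case False
      then have "j \<le> k" using Suc by simp
      then have "ts j \<le> ts k" using Suc by simp
      also have "ts k < ts (Suc k)" using assms(1) Suc(3) unfolding is_partition_def by blast
      finally show ?thesis by simp
    qed
  qed
  have "ts 0 \<le> ts i" using mono[of 0 i] assms by simp
  moreover have "ts i \<le> ts (n - 1)" using mono[of i "n - 1"] assms
    unfolding is_partition_def by simp
  ultimately show ?thesis using assms(1) unfolding is_partition_def by simp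
qed

lemma telescope:
  fixes r :: "nat \<Rightarrow> real"
  assumes "\<And>i. i \<le> m \<Longrightarrow> r i > 0"
  shows "(\<Prod>i<m. q i * r i / r (Suc i)) = (\<Prod>i<m. q i) * r 0 / r m"
  using assms
proof (induction m)
  case 0 then show ?case by simp
next
  case (Suc m)
  have "r m > 0" "r (Suc m) > 0" using Suc.prems by auto
  have "(\<Prod>i<Suc m. q i * r i / r (Suc i)) = (\<Prod>i<m. q i) * r 0 / r m * (q m * r m / r (Suc m))"
    using Suc by simp
  also have "\<dots> = (\<Prod>i<Suc m. q i) * r 0 / r (Suc m)"
    using \<open>r m > 0\<close> by (simp add: field_simps)
  finally show ?case .
qed

lemma rho_plus_minus:
  assumes part: "is_partition ta tb n ts"
    and pos: "\<forall>t\<in>{ta..tb}. \<forall>x. \<rho> x t > 0"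
  shows "rho_minus \<rho> p n ts xs = rho_plus \<rho> p n ts xs"
proof -
  let ?r = "\<lambda>i. \<rho> (xs i) (ts i)"
  have r: "?r i > 0" if "i \<le> n - 1" for i
  proof -
    have "n \<ge> 2" using part unfolding is_partition_def by simp
    then have "i < n" using that by simp
    then show ?thesis using partition_range[OF part] pos by auto
  qed
  have "rho_minus \<rho> p n ts xs = ?r (n - 1) *
      (\<Prod>i<n - 1. p (ts i) (xs i) (ts (Suc i)) (xs (Suc i)) * ?r i / ?r (Suc i))"
    unfolding rho_minus_def pback_def by simp
  also have "\<dots> = ?r (n - 1) * ((\<Prod>i<n - 1. p (ts i) (xs i) (ts (Suc i)) (xs (Suc i))) * ?r 0 / ?r (n - 1))"
    by (subst telescope) (use r in auto)
  also have "\<dots> = rho_plus \<rho> p n ts xs"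
    unfolding rho_plus_def using r[of "n - 1"] by (simp add: field_simps)
  finally show ?thesis .
qed

lemma rel_ent_self: "rel_ent n f f = 0"
  unfolding rel_ent_def
proof -
  have "(\<lambda>xs. f xs * ln (f xs / f xs)) = (\<lambda>_. 0)" by (rule ext, case_tac "f xs = 0") auto
  then show "(\<integral>xs. f xs * ln (f xs / f xs) \<partial>(PiM {..<n} (\<lambda>_. (lborel :: pt measure)))) = 0" by simp
qed

lemma mesh_limit_zero:
  assumes "\<And>n ts. is_partition ta tb n ts \<Longrightarrow> F n ts = 0"
  shows "mesh_limit ta tb F 0"
  unfolding mesh_limit_def using assms by auto



lemma DERIV_maxpow:
  fixes c r :: real
  assumes n: "n \<ge> 2"
  shows "((\<lambda>r. (max 0 (c - r)) ^ n) has_real_derivative - (real n * (max 0 (c - r)) ^ (n - 1))) (at r)"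
proof -
  consider "r < c" | "r > c" | "r = c" by linarith
  then show ?thesis
  proof cases
    case 1
    have "((\<lambda>r. (c - r) ^ n) has_real_derivative (real n * (c - r) ^ (n - 1)) * (-1)) (at r)"
      by (auto intro!: derivative_eq_intros)
    then have "((\<lambda>r. (max 0 (c - r)) ^ n) has_real_derivative (real n * (c - r) ^ (n - 1)) * (-1)) (at r)"
      apply (rule has_field_derivative_transform_within_open[where S="{..<c}"])
      using 1 by auto
    moreover have "- (real n * max 0 (c - r) ^ (n - 1)) = real n * (c - r) ^ (n - 1) * -1" using 1 by simp
    ultimately show ?thesis by metis
  next
    case 2
    have "((\<lambda>r. 0::real) has_real_derivative 0) (at r)" by simp
    then have "((\<lambda>r. (max 0 (c - r)) ^ n) has_real_derivative 0) (at r)"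
      apply (rule has_field_derivative_transform_within_open[where S="{c<..}"])
      using 2 n by auto
    moreover have "- (real n * max 0 (c - r) ^ (n - 1)) = 0" using 2 n by simp
    ultimately show ?thesis by metis
  next
    case 3
    have lim: "((\<lambda>h. ((max 0 (c - (c + h))) ^ n - (max 0 (c - c)) ^ n) / h) \<longlongrightarrow> 0) (at 0)"
    proof (rule Lim_null_comparison)
      show "\<forall>\<^sub>F h in at 0. norm (((max 0 (c - (c + h))) ^ n - (max 0 (c - c)) ^ n) / h) \<le> \<bar>h\<bar> ^ (n - 1)"
      proof (rule always_eventually, rule allI)
        fix h :: real
        have "\<bar>max 0 (-h)\<bar> \<le> \<bar>h\<bar>" by auto
        then have "\<bar>max 0 (-h)\<bar> ^ n \<le> \<bar>h\<bar> ^ n" by (rule power_mono) simp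
        moreover have "\<bar>h\<bar> ^ n = \<bar>h\<bar> ^ (n - 1) * \<bar>h\<bar>" using n
          by (metis One_nat_def Suc_diff_le le_trans one_le_numeral diff_Suc_1 power_Suc2)
        ultimately have "\<bar>max 0 (-h)\<bar> ^ n \<le> \<bar>h\<bar> ^ (n - 1) * \<bar>h\<bar>" by simp
        then show "norm (((max 0 (c - (c + h))) ^ n - (max 0 (c - c)) ^ n) / h) \<le> \<bar>h\<bar> ^ (n - 1)"
          using n by (cases "h = 0") (auto simp: abs_divide divide_le_eq power_abs zero_power)
      qed
      have tl: "((\<lambda>h::real. \<bar>h\<bar> ^ (n - 1)) \<longlongrightarrow> \<bar>0\<bar> ^ (n - 1)) (at 0)"
        by (intro tendsto_intros)
      have z: "\<bar>0::real\<bar> ^ (n - 1) = 0" using n by simp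
      show "((\<lambda>h::real. \<bar>h\<bar> ^ (n - 1)) \<longlongrightarrow> 0) (at 0)" using tl unfolding z .
    qed
    have z2: "- (real n * max 0 (c - r) ^ (n - 1)) = 0" using 3 n by simp
    show ?thesis unfolding DERIV_def 3 by (subst z2[unfolded 3]) (rule lim)
  qed
qed

lemma lborel_translate:
  fixes f :: "'a::euclidean_space \<Rightarrow> real"
  assumes "f \<in> borel_measurable borel"
  shows "integrable lborel (\<lambda>x. f (x + c)) \<longleftrightarrow> integrable lborel f"
    and "(\<integral>x. f (x + c) \<partial>lborel) = integral\<^sup>L lborel f"
proof -
  have m: "(+) c \<in> lborel \<rightarrow>\<^sub>M borel" by simp
  have "integrable lborel f \<longleftrightarrow> integrable (distr lborel borel ((+) c)) f"
    by (simp add: lborel_distr_plus)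
  also have "\<dots> \<longleftrightarrow> integrable lborel (\<lambda>x. f (c + x))"
    using integrable_distr_eq[OF m assms] .
  finally show "integrable lborel (\<lambda>x. f (x + c)) \<longleftrightarrow> integrable lborel f"
    by (simp add: add.commute)
  have "integral\<^sup>L lborel f = integral\<^sup>L (distr lborel borel ((+) c)) f"
    by (simp add: lborel_distr_plus)
  also have "\<dots> = (\<integral>x. f (c + x) \<partial>lborel)"
    using integral_distr[OF m assms] .
  finally show "(\<integral>x. f (x + c) \<partial>lborel) = integral\<^sup>L lborel f"
    by (simp add: add.commute)
qed

lemma pd_has_derivative:
  assumes "(g has_derivative g') (at x)"
  shows "pd i g x = g' (axis i 1)"
  unfolding pd_def using frechet_derivative_at[OF assms] by simp

lemma ibp_zero:
  fixes F :: "pt \<Rightarrow> real"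
  assumes dif: "\<And>x. F differentiable (at x)"
    and cont: "continuous_on UNIV (pd i F)"
    and intF: "integrable lborel F" and intD: "integrable lborel (pd i F)"
  shows "integral\<^sup>L lborel (pd i F) = 0"
proof -
  define e :: pt where "e = axis i 1"
  have Fcont: "continuous_on UNIV F"
    using dif by (simp add: continuous_at_imp_continuous_on differentiable_imp_continuous_within)
  have Fmeas[measurable]: "F \<in> borel_measurable borel"
    using Fcont by (rule borel_measurable_continuous_onI)
  have Dmeas[measurable]: "pd i F \<in> borel_measurable borel"
    using cont by (rule borel_measurable_continuous_onI)
  have ftc: "(LBINT s:{0..1}. pd i F (x + s *\<^sub>R e)) = F (x + e) - F x" for x
  proof -
    have deriv: "((\<lambda>s. F (x + s *\<^sub>R e)) has_vector_derivative pd i F (x + s *\<^sub>R e)) (at s within {0..1})"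
      for s
    proof -
      have d1: "((\<lambda>s. x + s *\<^sub>R e) has_derivative (\<lambda>h. h *\<^sub>R e)) (at s within {0..1})"
        by (auto intro!: derivative_eq_intros)
      have d2: "(F has_derivative frechet_derivative F (at (x + s *\<^sub>R e))) (at (x + s *\<^sub>R e))"
        using dif frechet_derivative_works by blast
      have lin: "linear (frechet_derivative F (at (x + s *\<^sub>R e)))"
        using d2 has_derivative_linear by blast
      have "((\<lambda>s. F (x + s *\<^sub>R e)) has_derivative (\<lambda>h. frechet_derivative F (at (x + s *\<^sub>R e)) (h *\<^sub>R e))) (at s within {0..1})"
        using has_derivative_compose[OF d1 d2] by simp
      moreover have "(\<lambda>h. frechet_derivative F (at (x + s *\<^sub>R e)) (h *\<^sub>R e)) = (\<lambda>h. h *\<^sub>R pd i F (x + s *\<^sub>R e))"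
        using lin unfolding pd_def e_def by (simp add: linear_scale)
      ultimately show ?thesis unfolding has_vector_derivative_def by simp
    qed
    have c: "continuous_on {0..1} (\<lambda>s. pd i F (x + s *\<^sub>R e))"
      by (rule continuous_on_compose2[OF cont]) (auto intro!: continuous_intros)
    have "(LBINT s=ereal 0..ereal 1. pd i F (x + s *\<^sub>R e)) = F (x + 1 *\<^sub>R e) - F (x + 0 *\<^sub>R e)"
      using interval_integral_FTC_finite[of 0 1 "\<lambda>s. pd i F (x + s *\<^sub>R e)" "\<lambda>s. F (x + s *\<^sub>R e)"] c deriv
      by simp
    then show ?thesis by (simp add: interval_integral_Icc)
  qed
  define f where "f s x = indicator {0..1::real} s * pd i F (x + s *\<^sub>R e)" for s x
  have fmeas: "(\<lambda>(s, x). f s x) \<in> borel_measurable (lborel \<Otimes>\<^sub>M lborel)"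
    unfolding f_def by measurable
  have trD: "integrable lborel (\<lambda>x. pd i F (x + c))" "(\<integral>x. pd i F (x + c) \<partial>lborel) = integral\<^sup>L lborel (pd i F)" for c
    using lborel_translate[OF Dmeas, of c] intD by auto
  have trDn: "(\<integral>x. \<bar>pd i F (x + c)\<bar> \<partial>lborel) = (\<integral>x. \<bar>pd i F x\<bar> \<partial>lborel)" for c
    using lborel_translate(2)[of "\<lambda>x. \<bar>pd i F x\<bar>" c] by simp
  have int: "integrable (lborel \<Otimes>\<^sub>M lborel) (\<lambda>(s, x). f s x)"
  proof (rule lborel_pair.Fubini_integrable)
    show "(\<lambda>(s, x). f s x) \<in> borel_measurable (lborel \<Otimes>\<^sub>M lborel)" by (rule fmeas)
    have "(\<lambda>s. \<integral>x. norm (case (s, x) of (s, x) \<Rightarrow> f s x) \<partial>lborel) =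
          (\<lambda>s. (\<integral>x. norm (pd i F x) \<partial>lborel) * indicator {0..1} s)"
      unfolding f_def by (auto simp: trDn abs_mult indicator_def mult.commute)
    moreover have "integrable lborel (\<lambda>s. (\<integral>x. norm (pd i F x) \<partial>lborel) * indicator {0..1::real} s)"
      by (rule borel_integrable_atLeastAtMost) auto
    ultimately show "integrable lborel (\<lambda>s. \<integral>x. norm (case (s, x) of (s, x) \<Rightarrow> f s x) \<partial>lborel)"
      by simp
    show "AE s in lborel. integrable lborel (\<lambda>x. case (s, x) of (s, x) \<Rightarrow> f s x)"
      unfolding f_def using trD(1) by auto
  qed
  have "(\<integral>x. (\<integral>s. f s x \<partial>lborel) \<partial>lborel) = (\<integral>s. (\<integral>x. f s x \<partial>lborel) \<partial>lborel)"
    using lborel_pair.Fubini_integral[OF int] .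
  moreover have "(\<integral>s. f s x \<partial>lborel) = F (x + e) - F x" for x
    using ftc[of x] unfolding f_def set_lebesgue_integral_def by simp
  moreover have "(\<integral>x. f s x \<partial>lborel) = indicator {0..1} s * integral\<^sup>L lborel (pd i F)" for s
    unfolding f_def using trD(2) by simp
  ultimately have "(\<integral>x. F (x + e) - F x \<partial>lborel) = (\<integral>s. indicator {0..1::real} s * integral\<^sup>L lborel (pd i F) \<partial>lborel)"
    by simp
  moreover have "(\<integral>x. F (x + e) - F x \<partial>lborel) = 0"
    using lborel_translate[OF Fmeas, of e] intF by simp
  moreover have "(\<integral>s. indicator {0..1::real} s * integral\<^sup>L lborel (pd i F) \<partial>lborel) = integral\<^sup>L lborel (pd i F)"
    by simp
  ultimately show ?thesis by simp
qed




lemma within_Icc_not_bot: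
  fixes t ta tb :: real
  assumes "ta < tb" "t \<in> {ta..tb}"
  shows "at t within {ta..tb} \<noteq> bot"
proof -
  consider "t = ta" | "t = tb" | "ta < t \<and> t < tb" using assms by fastforce
  then show ?thesis
  proof cases
    case 1 then show ?thesis using assms at_within_Icc_at_right[of ta tb] by simp
  next
    case 2 then show ?thesis using assms at_within_Icc_at_left[of ta tb] by simp
  next
    case 3 then show ?thesis using at_within_Icc_at[of ta t tb] by simp
  qed
qed

lemma tder_unique:
  assumes "ta < tb" "t \<in> {ta..tb}"
    and "((\<lambda>s. f x s) has_real_derivative d) (at t within {ta..tb})"
  shows "tder {ta..tb} f x t = d"
proof -
  have ex: "\<exists>d. ((\<lambda>s. f x s) has_real_derivative d) (at t within {ta..tb})" using assms by blast
  have "((\<lambda>s. f x s) has_real_derivative tder {ta..tb} f x t) (at t within {ta..tb})"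
    unfolding tder_def using someI_ex[OF ex] .
  then show ?thesis using has_field_derivative_unique assms within_Icc_not_bot by blast
qed

lemma tder_works:
  assumes "\<exists>d. ((\<lambda>s. f x s) has_real_derivative d) (at t within T)"
  shows "((\<lambda>s. f x s) has_real_derivative tder T f x t) (at t within T)"
  unfolding tder_def using someI_ex[OF assms] .

definition bq :: "pt \<Rightarrow> pt \<Rightarrow> real" where "bq x0 x = (x - x0) \<bullet> (x - x0)"
definition bump :: "pt \<Rightarrow> real \<Rightarrow> pt \<Rightarrow> real" where
  "bump x0 d x = (max 0 (d - bq x0 x)) ^ 3"
definition bump1 :: "pt \<Rightarrow> real \<Rightarrow> 3 \<Rightarrow> pt \<Rightarrow> real" where
  "bump1 x0 d i x = - 6 * (max 0 (d - bq x0 x)) ^ 2 * (x $ i - x0 $ i)"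
definition bump2 :: "pt \<Rightarrow> real \<Rightarrow> 3 \<Rightarrow> 3 \<Rightarrow> pt \<Rightarrow> real" where
  "bump2 x0 d i j x = 24 * max 0 (d - bq x0 x) * (x $ j - x0 $ j) * (x $ i - x0 $ i)
      - 6 * (max 0 (d - bq x0 x)) ^ 2 * (if i = j then 1 else 0)"

lemma bq_deriv: "(bq x0 has_derivative (\<lambda>h. 2 * ((x - x0) \<bullet> h))) (at x)"
proof -
  have "((\<lambda>x. (x - x0) \<bullet> (x - x0)) has_derivative (\<lambda>h. h \<bullet> (x - x0) + (x - x0) \<bullet> h)) (at x)"
    by (auto intro!: derivative_eq_intros)
  moreover have "(\<lambda>h. h \<bullet> (x - x0) + (x - x0) \<bullet> h) = (\<lambda>h. 2 * ((x - x0) \<bullet> h))"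
    by (auto simp: inner_commute)
  ultimately show ?thesis unfolding bq_def[abs_def] by simp
qed

lemma maxpow_comp_deriv:
  assumes n: "n \<ge> 2"
  shows "((\<lambda>x. (max 0 (d - bq x0 x)) ^ n) has_derivative
     (\<lambda>h. - (real n * (max 0 (d - bq x0 x)) ^ (n - 1)) * (2 * ((x - x0) \<bullet> h)))) (at x)"
proof -
  have "((\<lambda>r. (max 0 (d - r)) ^ n) has_derivative (\<lambda>h. - (real n * (max 0 (d - bq x0 x)) ^ (n - 1)) * h)) (at (bq x0 x))"
    by (rule DERIV_maxpow[OF n, of d "bq x0 x", unfolded has_field_derivative_def])
  from has_derivative_compose[OF bq_deriv this] show ?thesis by simp
qed

lemma bump_deriv: "(bump x0 d has_derivative (\<lambda>h. \<Sum>i\<in>UNIV. h $ i * bump1 x0 d i x)) (at x)"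
proof -
  have "(bump x0 d has_derivative (\<lambda>h. - (real 3 * (max 0 (d - bq x0 x)) ^ (3 - 1)) * (2 * ((x - x0) \<bullet> h)))) (at x)"
    using maxpow_comp_deriv[of 3 d x0 x] unfolding bump_def[abs_def] by simp
  moreover have "(\<lambda>h. - (real 3 * (max 0 (d - bq x0 x)) ^ (3 - 1)) * (2 * ((x - x0) \<bullet> h))) = (\<lambda>h. \<Sum>i\<in>UNIV. h $ i * bump1 x0 d i x)"
  proof
    fix h :: pt
    show "- (real 3 * (max 0 (d - bq x0 x)) ^ (3 - 1)) * (2 * ((x - x0) \<bullet> h)) = (\<Sum>i\<in>UNIV. h $ i * bump1 x0 d i x)"
      unfolding inner_vec_def sum_distrib_left bump1_def by (rule sum.cong) (auto simp: algebra_simps)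
  qed
  ultimately show ?thesis by simp
qed

lemma sum_axis: "(\<Sum>k\<in>UNIV. (axis i (1::real) :: pt) $ k * g k) = g i"
proof -
  have "(\<Sum>k\<in>UNIV. (axis i (1::real) :: pt) $ k * g k) = (\<Sum>k\<in>UNIV. if k = i then g k else 0)"
    by (rule sum.cong) (auto simp: axis_def)
  then show ?thesis by simp
qed

lemma pd_bump: "pd i (bump x0 d) = bump1 x0 d i"
  by (rule ext, subst pd_has_derivative[OF bump_deriv]) (simp add: sum_axis)

lemma bump1_deriv: "(bump1 x0 d i has_derivative (\<lambda>h. \<Sum>j\<in>UNIV. h $ j * bump2 x0 d i j x)) (at x)"
proof -
  have d1: "((\<lambda>x. (max 0 (d - bq x0 x)) ^ 2) has_derivative
     (\<lambda>h. - (real 2 * (max 0 (d - bq x0 x)) ^ (2 - 1)) * (2 * ((x - x0) \<bullet> h)))) (at x)"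
    by (rule maxpow_comp_deriv) simp
  have d2: "((\<lambda>x. x $ i - x0 $ i) has_derivative (\<lambda>h. h $ i)) (at x)"
    using bounded_linear_imp_has_derivative[OF bounded_linear_vec_nth, of i]
    by (auto intro!: derivative_eq_intros)
  have "((\<lambda>x. -6 * ((max 0 (d - bq x0 x)) ^ 2 * (x $ i - x0 $ i))) has_derivative (\<lambda>h. -6 * ((max 0 (d - bq x0 x)) ^ 2 * h $ i
        + - (real 2 * (max 0 (d - bq x0 x)) ^ (2 - 1)) * (2 * ((x - x0) \<bullet> h)) * (x $ i - x0 $ i)))) (at x)"
    by (rule has_derivative_mult_right[OF has_derivative_mult[OF d1 d2]])
  moreover have "(\<lambda>h. -6 * ((max 0 (d - bq x0 x)) ^ 2 * h $ i
        + - (real 2 * (max 0 (d - bq x0 x)) ^ (2 - 1)) * (2 * ((x - x0) \<bullet> h)) * (x $ i - x0 $ i)))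
      = (\<lambda>h. \<Sum>j\<in>UNIV. h $ j * bump2 x0 d i j x)"
  proof
    fix h :: pt
    have "(\<Sum>j\<in>UNIV. h $ j * bump2 x0 d i j x) = (\<Sum>j\<in>UNIV. h $ j * (24 * max 0 (d - bq x0 x) * (x $ j - x0 $ j) * (x $ i - x0 $ i)))
        - (\<Sum>j\<in>UNIV. h $ j * (6 * (max 0 (d - bq x0 x)) ^ 2 * (if i = j then 1 else 0)))"
      unfolding bump2_def by (simp add: right_diff_distrib sum_subtractf)
    also have "(\<Sum>j\<in>UNIV. h $ j * (6 * (max 0 (d - bq x0 x)) ^ 2 * (if i = j then 1 else 0))) = h $ i * (6 * (max 0 (d - bq x0 x)) ^ 2)"
    proof -
      have "(\<Sum>j\<in>UNIV. h $ j * (6 * (max 0 (d - bq x0 x)) ^ 2 * (if i = j then 1 else 0))) = (\<Sum>j\<in>UNIV. if j = i then h $ j * (6 * (max 0 (d - bq x0 x)) ^ 2) else 0)"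
        by (rule sum.cong) auto
      then show ?thesis by simp
    qed
    also have "(\<Sum>j\<in>UNIV. h $ j * (24 * max 0 (d - bq x0 x) * (x $ j - x0 $ j) * (x $ i - x0 $ i)))
       = 24 * max 0 (d - bq x0 x) * (x $ i - x0 $ i) * ((x - x0) \<bullet> h)"
      unfolding inner_vec_def sum_distrib_left by (rule sum.cong) (auto simp: algebra_simps)
    finally show "-6 * ((max 0 (d - bq x0 x)) ^ 2 * h $ i
        + - (real 2 * (max 0 (d - bq x0 x)) ^ (2 - 1)) * (2 * ((x - x0) \<bullet> h)) * (x $ i - x0 $ i))
      = (\<Sum>j\<in>UNIV. h $ j * bump2 x0 d i j x)"
      by (simp add: algebra_simps)
  qed
  ultimately show ?thesis unfolding bump1_def[abs_def] by (simp add: mult.assoc)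
qed

lemma pd_bump1: "pd j (bump1 x0 d i) = bump2 x0 d i j"
  by (rule ext, subst pd_has_derivative[OF bump1_deriv]) (simp add: sum_axis)


lemma bq_norm: "bq x0 x = (norm (x - x0))\<^sup>2"
  unfolding bq_def by (simp add: power2_norm_eq_inner)

lemma bump_out: "x \<notin> cball x0 (sqrt d) \<Longrightarrow> max 0 (d - bq x0 x) = 0"
proof -
  assume "x \<notin> cball x0 (sqrt d)"
  then have "sqrt d < norm (x - x0)" by (simp add: dist_norm norm_minus_commute)
  have "d < (norm (x - x0))\<^sup>2"
  proof (cases "d \<le> 0")
    case True
    show ?thesis
    proof (cases "d < 0")
      case True
      have "0 \<le> (norm (x - x0))\<^sup>2" by simp
      then show ?thesis using True by linarith
    next
      case False
      then have "d = 0" using \<open>d \<le> 0\<close> by simp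
      then have "0 < norm (x - x0)" using \<open>sqrt d < norm (x - x0)\<close> by simp
      then show ?thesis using \<open>d = 0\<close> by simp
    qed
  next
    case False
    then have "(sqrt d)\<^sup>2 < (norm (x - x0))\<^sup>2"
      using \<open>sqrt d < norm (x - x0)\<close> by (intro power_strict_mono) auto
    then show ?thesis using False by simp
  qed
  then show ?thesis by (simp add: bq_norm)
qed

lemma bump_cont: "continuous_on UNIV (bump x0 d)"
  unfolding bump_def[abs_def] bq_def by (auto intro!: continuous_intros)
lemma bump1_cont: "continuous_on UNIV (bump1 x0 d i)"
  unfolding bump1_def[abs_def] bq_def by (auto intro!: continuous_intros)
lemma bump2_cont: "continuous_on UNIV (bump2 x0 d i j)"
  unfolding bump2_def[abs_def] bq_def by (auto intro!: continuous_intros)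

lemma bump_nonneg: "0 \<le> bump x0 d x"
  unfolding bump_def by simp

lemma bump_le: "0 \<le> d \<Longrightarrow> bump x0 d x \<le> d ^ 3"
  unfolding bump_def
proof -
  assume "0 \<le> d"
  have "0 \<le> bq x0 x" unfolding bq_def by simp
  then have "max 0 (d - bq x0 x) \<le> d" using \<open>0 \<le> d\<close> by simp
  then show "(max 0 (d - bq x0 x)) ^ 3 \<le> d ^ 3" by (rule power_mono) simp
qed

lemma bump_center: "0 < d \<Longrightarrow> 0 < bump x0 d x0"
  unfolding bump_def bq_def by simp

lemma cont_support_integrable:
  fixes h :: "'a::euclidean_space \<Rightarrow> real"
  assumes "continuous_on UNIV h" "compact K" "\<And>x. x \<notin> K \<Longrightarrow> h x = 0"
  shows "integrable lborel h"
proof -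
  have "integrable lborel (\<lambda>x. indicator K x *\<^sub>R h x)"
    by (rule borel_integrable_compact[OF assms(2)]) (rule continuous_on_subset[OF assms(1)], simp)
  moreover have "(\<lambda>x. indicator K x *\<^sub>R h x) = h"
  proof
    fix x show "indicator K x *\<^sub>R h x = h x" using assms(3)[of x] by (cases "x \<in> K") auto
  qed
  ultimately show ?thesis by simp
qed

lemma cont_fst:
  assumes "continuous_on UNIV f"
  shows "continuous_on S (\<lambda>(x, t). f x)"
proof -
  have "continuous_on S (\<lambda>z. f (fst z))"
    by (rule continuous_on_compose2[OF assms continuous_on_fst[OF continuous_on_id]]) auto
  then show ?thesis by (simp add: case_prod_beta)
qed

lemma test_fun_bump:
  fixes ta tb :: real
  assumes "ta < tb"
  shows "test_fun {ta..tb} (\<lambda>x t. bump x0 d x)"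
proof -
  have pd1: "pd i (\<lambda>y. bump x0 d y) = bump1 x0 d i" for i
    using pd_bump[of i x0 d] by (simp add: eta_contract_eq)
  have pd2: "pd j (\<lambda>y. pd i (\<lambda>z. bump x0 d z) y) = bump2 x0 d i j" for i j
    using pd_bump1[of j x0 d i] pd1[of i] by simp
  have tder0: "tder {ta..tb} (\<lambda>x t. bump x0 d x) x t = 0" if "t \<in> {ta..tb}" for x t
    by (rule tder_unique[OF assms that]) simp
  have "C1x {ta..tb} (\<lambda>x t. bump x0 d x)"
    unfolding C1x_def
  proof (intro conjI allI ballI)
    show "continuous_on (UNIV \<times> {ta..tb}) (\<lambda>(x, t). bump x0 d x)"
      by (rule cont_fst[OF bump_cont])
    show "(\<lambda>y. bump x0 d y) differentiable at x" for x
      using bump_deriv by (auto simp: differentiable_def)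
    show "continuous_on (UNIV \<times> {ta..tb}) (\<lambda>(x, t). pd i (\<lambda>y. bump x0 d y) x)" for i
      unfolding pd1 by (rule cont_fst[OF bump1_cont])
  qed
  moreover have "\<forall>i. \<forall>t\<in>{ta..tb}. \<forall>x. (\<lambda>y. pd i (\<lambda>z. bump x0 d z) y) differentiable (at x)"
    unfolding pd1 differentiable_def using bump1_deriv by blast
  moreover have "\<forall>i j. continuous_on (UNIV \<times> {ta..tb}) (\<lambda>(x, t). pd j (\<lambda>y. pd i (\<lambda>z. bump x0 d z) y) x)"
    unfolding pd2 by (intro allI cont_fst[OF bump2_cont])
  moreover have "\<forall>x. \<forall>t\<in>{ta..tb}. \<exists>D. ((\<lambda>s. bump x0 d x) has_real_derivative D) (at t within {ta..tb})"
    by (intro allI ballI exI[of _ 0] DERIV_const)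
  moreover have "continuous_on (UNIV \<times> {ta..tb}) (\<lambda>(x, t). tder {ta..tb} (\<lambda>x t. bump x0 d x) x t)"
  proof -
    have "continuous_on (UNIV \<times> {ta..tb}) (\<lambda>(x, t). 0::real)" by simp
    then show ?thesis by (rule continuous_on_cong[THEN iffD1, rotated 2]) (auto simp: tder0)
  qed
  ultimately have "C21 {ta..tb} (\<lambda>x t. bump x0 d x)" unfolding C21_def by blast
  moreover have "\<forall>x. \<forall>t\<in>{ta..tb}. x \<notin> cball x0 (sqrt d) \<longrightarrow> bump x0 d x = 0"
    using bump_out unfolding bump_def by simp
  ultimately show ?thesis unfolding test_fun_def
    by (intro conjI exI[of _ "cball x0 (sqrt d)"]) (simp_all only: compact_cball)
qed



lemma prod_meas:
  assumes "(\<lambda>z. p (fst z) (snd z)) \<in> borel_measurable borel"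
  shows "(\<lambda>z. p (fst z) (snd z)) \<in> borel_measurable (lborel \<Otimes>\<^sub>M (lborel :: pt measure))"
  using assms by (simp add: lborel_prod)

lemma fwd_fubini:
  fixes \<phi> :: "pt \<Rightarrow> real" and r :: "pt \<Rightarrow> real" and q :: "pt \<Rightarrow> pt \<Rightarrow> real"
  assumes pm: "(\<lambda>z. q (fst z) (snd z)) \<in> borel_measurable borel"
    and qd: "\<And>x. (\<forall>y. q x y \<ge> 0) \<and> integrable lborel (q x) \<and> (\<integral>y. q x y \<partial>lborel) = 1"
    and rint: "integrable lborel r" and rnn: "\<And>x. r x \<ge> 0"
    and phim: "\<phi> \<in> borel_measurable borel" and phib: "\<And>y. \<bar>\<phi> y\<bar> \<le> C"
  shows "integrable lborel (\<lambda>x. r x * (\<integral>y. \<phi> y * q x y \<partial>lborel))"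
    and "(\<integral>x. r x * (\<integral>y. \<phi> y * q x y \<partial>lborel) \<partial>lborel) = (\<integral>y. \<phi> y * (\<integral>x. r x * q x y \<partial>lborel) \<partial>lborel)"
proof -
  have pm'[measurable]: "(\<lambda>z. q (fst z) (snd z)) \<in> borel_measurable (lborel \<Otimes>\<^sub>M lborel)"
    by (rule prod_meas[OF pm])
  have rm[measurable]: "r \<in> borel_measurable lborel" using rint by (rule borel_measurable_integrable)
  have phim'[measurable]: "\<phi> \<in> borel_measurable lborel" using phim by simp
  define f where "f = (\<lambda>(x::pt, y::pt). r x * (\<phi> y * q x y))"
  have fm: "f \<in> borel_measurable (lborel \<Otimes>\<^sub>M lborel)"
  proof -
    have "(\<lambda>z::pt\<times>pt. r (fst z) * (\<phi> (snd z) * q (fst z) (snd z))) \<in> borel_measurable (lborel \<Otimes>\<^sub>M lborel)"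
      by measurable
    then show ?thesis unfolding f_def by (simp add: case_prod_beta)
  qed
  have C0: "0 \<le> C" using phib[of 0] by simp
  have iq: "integrable lborel (\<lambda>y. \<phi> y * q x y)" for x
  proof (rule Bochner_Integration.integrable_bound[of _ "\<lambda>y. C * q x y"])
    show "integrable lborel (\<lambda>y. C * q x y)" using qd[of x] by simp
    have [measurable]: "q x \<in> borel_measurable lborel"
      using qd[of x] borel_measurable_integrable by blast
    show "(\<lambda>y. \<phi> y * q x y) \<in> borel_measurable lborel"
      by measurable
    show "AE y in lborel. norm (\<phi> y * q x y) \<le> norm (C * q x y)"
      using qd[of x] phib C0 by (auto simp: abs_mult intro!: mult_right_mono)
  qed
  have iqa: "integrable lborel (\<lambda>y. \<bar>\<phi> y\<bar> * q x y)" for x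
  proof -
    have "(\<lambda>y. \<bar>\<phi> y * q x y\<bar>) = (\<lambda>y. \<bar>\<phi> y\<bar> * q x y)" using qd[of x] by (auto simp: abs_mult)
    then show ?thesis using integrable_abs[OF iq[of x]] by simp
  qed
  have int: "integrable (lborel \<Otimes>\<^sub>M lborel) f"
  proof (rule lborel_pair.Fubini_integrable[OF fm])
    show "AE x in lborel. integrable lborel (\<lambda>y. f (x, y))"
      unfolding f_def using iq by simp
    show "integrable lborel (\<lambda>x. \<integral>y. norm (f (x, y)) \<partial>lborel)"
    proof (rule Bochner_Integration.integrable_bound[of _ "\<lambda>x. C * r x"])
      show "integrable lborel (\<lambda>x. C * r x)" using rint by simp
      show "(\<lambda>x. \<integral>y. norm (f (x, y)) \<partial>lborel) \<in> borel_measurable lborel"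
        using fm by measurable
      show "AE x in lborel. norm (\<integral>y. norm (f (x, y)) \<partial>lborel) \<le> norm (C * r x)"
      proof (rule AE_I2)
        fix x
        have "(\<integral>y. norm (f (x, y)) \<partial>lborel) = r x * (\<integral>y. \<bar>\<phi> y\<bar> * q x y \<partial>lborel)"
          unfolding f_def using rnn[of x] qd[of x] by (simp add: abs_mult)
        also have "(\<integral>y. \<bar>\<phi> y\<bar> * q x y \<partial>lborel) \<le> (\<integral>y. C * q x y \<partial>lborel)"
          using qd[of x] phib iqa[of x] by (intro integral_mono) (auto simp: abs_mult intro!: mult_right_mono)
        also have "(\<integral>y. C * q x y \<partial>lborel) = C" using qd[of x] by simp
        finally have le: "(\<integral>y. norm (f (x, y)) \<partial>lborel) \<le> r x * C"
          using rnn[of x] by (simp add: mult_left_mono)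
        have "0 \<le> (\<integral>y. norm (f (x, y)) \<partial>lborel)" by simp
        then show "norm (\<integral>y. norm (f (x, y)) \<partial>lborel) \<le> norm (C * r x)"
          using le rnn[of x] C0 by (simp add: mult.commute)
      qed
    qed
  qed
  have eq1: "(\<lambda>x. r x * (\<integral>y. \<phi> y * q x y \<partial>lborel)) = (\<lambda>x. \<integral>y. f (x, y) \<partial>lborel)"
    unfolding f_def by simp
  show "integrable lborel (\<lambda>x. r x * (\<integral>y. \<phi> y * q x y \<partial>lborel))"
    unfolding eq1 by (rule lborel_pair.integrable_fst'[OF int])
  have "(\<integral>y. (\<integral>x. f (x, y) \<partial>lborel) \<partial>lborel) = (\<integral>x. (\<integral>y. f (x, y) \<partial>lborel) \<partial>lborel)"
    using lborel_pair.Fubini_integral[of "\<lambda>x y. f (x, y)"] int by simp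
  moreover have "(\<integral>x. f (x, y) \<partial>lborel) = \<phi> y * (\<integral>x. r x * q x y \<partial>lborel)" for y
    unfolding f_def by (simp add: algebra_simps)
  ultimately show "(\<integral>x. r x * (\<integral>y. \<phi> y * q x y \<partial>lborel) \<partial>lborel) = (\<integral>y. \<phi> y * (\<integral>x. r x * q x y \<partial>lborel) \<partial>lborel)"
    unfolding eq1 by simp
qed


lemma bwd_fubini:
  fixes \<phi> :: "pt \<Rightarrow> real" and r :: "pt \<Rightarrow> real" and q :: "pt \<Rightarrow> pt \<Rightarrow> real"
  assumes pm: "(\<lambda>z. q (fst z) (snd z)) \<in> borel_measurable borel"
    and qd: "\<And>y. (\<forall>x. q y x \<ge> 0) \<and> integrable lborel (q y) \<and> (\<integral>x. q y x \<partial>lborel) = 1"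
    and rint: "integrable lborel r" and rnn: "\<And>x. r x \<ge> 0"
    and phim: "\<phi> \<in> borel_measurable borel" and phib: "\<And>y. \<bar>\<phi> y\<bar> \<le> C"
  shows "integrable lborel (\<lambda>x. \<integral>y. \<phi> y * r y * q y x \<partial>lborel)"
    and "(\<integral>x. (\<integral>y. \<phi> y * r y * q y x \<partial>lborel) \<partial>lborel) = (\<integral>y. \<phi> y * r y \<partial>lborel)"
proof -
  have pm'[measurable]: "(\<lambda>z. q (fst z) (snd z)) \<in> borel_measurable (lborel \<Otimes>\<^sub>M lborel)"
    by (rule prod_meas[OF pm])
  have rm[measurable]: "r \<in> borel_measurable lborel" using rint by (rule borel_measurable_integrable)
  have phim'[measurable]: "\<phi> \<in> borel_measurable lborel" using phim by simp
  define f where "f = (\<lambda>(y::pt, x::pt). \<phi> y * r y * q y x)"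
  have fm: "f \<in> borel_measurable (lborel \<Otimes>\<^sub>M lborel)"
  proof -
    have "(\<lambda>z::pt\<times>pt. \<phi> (fst z) * r (fst z) * q (fst z) (snd z)) \<in> borel_measurable (lborel \<Otimes>\<^sub>M lborel)"
      by measurable
    then show ?thesis unfolding f_def by (simp add: case_prod_beta)
  qed
  have C0: "0 \<le> C" using phib[of 0] by simp
  have int: "integrable (lborel \<Otimes>\<^sub>M lborel) f"
  proof (rule lborel_pair.Fubini_integrable[OF fm])
    show "AE y in lborel. integrable lborel (\<lambda>x. f (y, x))"
      unfolding f_def using qd by simp
    show "integrable lborel (\<lambda>y. \<integral>x. norm (f (y, x)) \<partial>lborel)"
    proof (rule Bochner_Integration.integrable_bound[of _ "\<lambda>y. C * r y"])
      show "integrable lborel (\<lambda>y. C * r y)" using rint by simp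
      show "(\<lambda>y. \<integral>x. norm (f (y, x)) \<partial>lborel) \<in> borel_measurable lborel"
        using fm by measurable
      show "AE y in lborel. norm (\<integral>x. norm (f (y, x)) \<partial>lborel) \<le> norm (C * r y)"
      proof (rule AE_I2)
        fix y
        have "(\<integral>x. norm (f (y, x)) \<partial>lborel) = \<bar>\<phi> y\<bar> * r y * (\<integral>x. q y x \<partial>lborel)"
          unfolding f_def using rnn[of y] qd[of y] by (simp add: abs_mult)
        also have "\<dots> = \<bar>\<phi> y\<bar> * r y" using qd[of y] by simp
        also have "\<dots> \<le> C * r y" using phib[of y] rnn[of y] by (rule mult_right_mono)
        finally have le: "(\<integral>x. norm (f (y, x)) \<partial>lborel) \<le> C * r y" .
        have "0 \<le> (\<integral>x. norm (f (y, x)) \<partial>lborel)" by simp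
        then show "norm (\<integral>x. norm (f (y, x)) \<partial>lborel) \<le> norm (C * r y)"
          using le rnn[of y] C0 by simp
      qed
    qed
  qed
  have eq1: "(\<lambda>x. \<integral>y. \<phi> y * r y * q y x \<partial>lborel) = (\<lambda>x. \<integral>y. f (y, x) \<partial>lborel)"
    unfolding f_def by simp
  show "integrable lborel (\<lambda>x. \<integral>y. \<phi> y * r y * q y x \<partial>lborel)"
    unfolding eq1 using lborel_pair.integrable_snd[of "\<lambda>y x. f (y, x)"] int by simp
  have "(\<integral>x. (\<integral>y. f (y, x) \<partial>lborel) \<partial>lborel) = (\<integral>y. (\<integral>x. f (y, x) \<partial>lborel) \<partial>lborel)"
    using lborel_pair.Fubini_integral[of "\<lambda>y x. f (y, x)"] int by simp
  moreover have "(\<integral>x. f (y, x) \<partial>lborel) = \<phi> y * r y" for y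
    unfolding f_def using qd[of y] by simp
  ultimately show "(\<integral>x. (\<integral>y. \<phi> y * r y * q y x \<partial>lborel) \<partial>lborel) = (\<integral>y. \<phi> y * r y \<partial>lborel)"
    unfolding eq1 by simp
qed

lemma lborel_eq_cbox:
  fixes g :: "pt \<Rightarrow> real"
  assumes "continuous_on UNIV g" "\<And>x. x \<notin> cbox a b \<Longrightarrow> g x = 0"
  shows "integral\<^sup>L lborel g = integral (cbox a b) g"
proof -
  have "integrable lborel g" by (rule cont_support_integrable[OF assms(1) compact_cbox assms(2)])
  then have "(g has_integral integral\<^sup>L lborel g) UNIV" by (rule has_integral_integral_lborel)
  moreover have "(\<lambda>x. if x \<in> cbox a b then g x else 0) = g" using assms(2) by auto
  ultimately have "(g has_integral integral\<^sup>L lborel g) (cbox a b)"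
    using has_integral_restrict_UNIV[of "cbox a b" g] by simp
  then show ?thesis by (simp add: integral_unique)
qed

lemma cont_slice:
  assumes "continuous_on (UNIV \<times> T) (\<lambda>(x, t). F x t)" "t \<in> T"
  shows "continuous_on UNIV (\<lambda>x. F x t)"
proof -
  have "continuous_on UNIV (\<lambda>x. (\<lambda>(x, t). F x t) (x, t))"
    by (rule continuous_on_compose2[OF assms(1)]) (use assms(2) in \<open>auto intro!: continuous_intros\<close>)
  then show ?thesis by simp
qed

lemma cont_swap:
  assumes "continuous_on (UNIV \<times> T) (\<lambda>(x, t). F x t)"
  shows "continuous_on (T \<times> S) (\<lambda>(t, x). F x t)"
proof -
  have "continuous_on (T \<times> S) (\<lambda>z. (\<lambda>(x, t). F x t) (snd z, fst z))"
    by (rule continuous_on_compose2[OF assms]) (auto intro!: continuous_intros)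
  then show ?thesis by (simp add: case_prod_beta)
qed

lemma Phi_deriv:
  fixes \<rho> dr :: "pt \<Rightarrow> real \<Rightarrow> real" and \<phi> :: "pt \<Rightarrow> real" and ta tb t :: real
  assumes tab: "ta < tb" and t: "t \<in> {ta..tb}"
    and rc: "continuous_on (UNIV \<times> {ta..tb}) (\<lambda>(x, t). \<rho> x t)"
    and dr: "\<And>x s. s \<in> {ta..tb} \<Longrightarrow> ((\<lambda>s. \<rho> x s) has_real_derivative dr x s) (at s within {ta..tb})"
    and dc: "continuous_on (UNIV \<times> {ta..tb}) (\<lambda>(x, t). dr x t)"
    and pc: "continuous_on UNIV \<phi>" and K: "compact K" and pK: "\<And>x. x \<notin> K \<Longrightarrow> \<phi> x = 0"
  shows "((\<lambda>s. \<integral>x. \<rho> x s * \<phi> x \<partial>lborel) has_real_derivative (\<integral>x. dr x t * \<phi> x \<partial>lborel)) (at t within {ta..tb})"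
proof -
  obtain a :: pt where Ka: "K \<subseteq> cbox (-a) a"
    using bounded_subset_cbox_symmetric[OF compact_imp_bounded[OF K]] by blast
  have out: "\<phi> x = 0" if "x \<notin> cbox (-a) a" for x using Ka that pK by blast
  have eqf: "(\<integral>x. \<rho> x s * \<phi> x \<partial>lborel) = integral (cbox (-a) a) (\<lambda>x. \<rho> x s * \<phi> x)" if "s \<in> {ta..tb}" for s
    by (rule lborel_eq_cbox) (use cont_slice[OF rc that] pc out in \<open>auto intro!: continuous_intros\<close>)
  have eqd: "(\<integral>x. dr x t * \<phi> x \<partial>lborel) = integral (cbox (-a) a) (\<lambda>x. dr x t * \<phi> x)"
    by (rule lborel_eq_cbox) (use cont_slice[OF dc t] pc out in \<open>auto intro!: continuous_intros\<close>)
  have L: "((\<lambda>s. integral (cbox (-a) a) (\<lambda>x. \<rho> x s * \<phi> x)) has_field_derivative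
      integral (cbox (-a) a) (\<lambda>x. dr x t * \<phi> x)) (at t within {ta..tb})"
  proof (rule leibniz_rule_field_derivative[where f="\<lambda>s x. \<rho> x s * \<phi> x" and fx="\<lambda>s x. dr x s * \<phi> x"])
    show "((\<lambda>s. \<rho> x s * \<phi> x) has_field_derivative dr x s * \<phi> x) (at s within {ta..tb})"
      if "s \<in> {ta..tb}" for s x
      using dr[OF that, of x] by (auto intro!: derivative_eq_intros)
    show "(\<lambda>x. \<rho> x s * \<phi> x) integrable_on cbox (-a) a" if "s \<in> {ta..tb}" for s
    proof -
      have "continuous_on UNIV (\<lambda>x. \<rho> x s * \<phi> x)" using cont_slice[OF rc that] pc by (rule continuous_on_mult)
      then show ?thesis by (rule integrable_continuous[OF continuous_on_subset]) simp
    qed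
    have "continuous_on ({ta..tb} \<times> cbox (-a) a) (\<lambda>(s, x). dr x s)" by (rule cont_swap[OF dc])
    moreover have "continuous_on ({ta..tb} \<times> cbox (-a) a) (\<lambda>(s, x). \<phi> x)"
      using continuous_on_compose2[OF pc continuous_on_snd[OF continuous_on_id], of "{ta..tb} \<times> cbox (-a) a"]
      by (simp add: case_prod_beta)
    ultimately show "continuous_on ({ta..tb} \<times> cbox (-a) a) (\<lambda>(s, x). dr x s * \<phi> x)"
      using continuous_on_mult[of "{ta..tb} \<times> cbox (-a) a" "\<lambda>(s, x). dr x s" "\<lambda>(s, x). \<phi> x"]
      by (simp add: case_prod_beta)
    show "t \<in> {ta..tb}" by (rule t)
    show "convex {ta..tb}" by simp
  qed
  show ?thesis
    unfolding eqd has_field_derivative_def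
    apply (rule has_derivative_transform_within[of _ _ _ _ 1])
    using L t eqf unfolding has_field_derivative_def by auto
qed



lemma right_deriv_eq:
  fixes \<Phi> :: "real \<Rightarrow> real"
  assumes D: "(\<Phi> has_real_derivative D) (at t within {ta..tb})" and "ta \<le> t" "t < tb"
    and L: "((\<lambda>dt. (\<Phi> (t + dt) - \<Phi> t) / dt) \<longlongrightarrow> L) (at_right 0)"
  shows "L = D"
proof -
  have "(\<Phi> has_real_derivative D) (at t within {t..tb})"
    using has_field_derivative_subset[OF D] assms by auto
  then have "((\<lambda>y. (\<Phi> y - \<Phi> t) / (y - t)) \<longlongrightarrow> D) (at t within {t..tb})"
    using has_field_derivative_iff by blast
  then have "((\<lambda>y. (\<Phi> y - \<Phi> t) / (y - t)) \<longlongrightarrow> D) (at_right t)"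
    using at_within_Icc_at_right[of t tb] assms by simp
  then have "((\<lambda>dt. (\<Phi> (dt + t) - \<Phi> t) / (dt + t - t)) \<longlongrightarrow> D) (at_right 0)"
    unfolding at_right_to_0[of t] filterlim_filtermap .
  then have "((\<lambda>dt. (\<Phi> (t + dt) - \<Phi> t) / dt) \<longlongrightarrow> D) (at_right 0)" by (simp add: add.commute)
  then show ?thesis using L tendsto_unique trivial_limit_at_right_real by blast
qed

lemma left_deriv_eq:
  fixes \<Phi> :: "real \<Rightarrow> real"
  assumes D: "(\<Phi> has_real_derivative D) (at t within {ta..tb})" and "ta < t" "t \<le> tb"
    and L: "((\<lambda>dt. (\<Phi> t - \<Phi> (t - dt)) / dt) \<longlongrightarrow> L) (at_right 0)"
  shows "L = D"
proof -
  have "(\<Phi> has_real_derivative D) (at t within {ta..t})"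
    using has_field_derivative_subset[OF D] assms by auto
  then have "((\<lambda>y. (\<Phi> y - \<Phi> t) / (y - t)) \<longlongrightarrow> D) (at t within {ta..t})"
    using has_field_derivative_iff by blast
  then have lt: "((\<lambda>y. (\<Phi> y - \<Phi> t) / (y - t)) \<longlongrightarrow> D) (at_left t)"
    using at_within_Icc_at_left[of ta t] assms by simp
  have eq: "at_left t = filtermap (\<lambda>x. t - x) (at_right 0)"
    unfolding at_left_minus[of t] at_right_to_0[of "-t"] filtermap_filtermap by (simp add: o_def)
  have "((\<lambda>y. (\<Phi> y - \<Phi> t) / (y - t)) \<longlongrightarrow> D) (filtermap (\<lambda>x. t - x) (at_right 0))"
    using lt unfolding eq .
  then have "((\<lambda>dt. (\<Phi> (t - dt) - \<Phi> t) / (t - dt - t)) \<longlongrightarrow> D) (at_right 0)"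
    unfolding filterlim_filtermap .
  moreover have "(\<Phi> (t - dt) - \<Phi> t) / (t - dt - t) = (\<Phi> t - \<Phi> (t - dt)) / dt" for dt
  proof -
    have "(\<Phi> (t - dt) - \<Phi> t) / (t - dt - t) = (\<Phi> (t - dt) - \<Phi> t) / (- dt)" by simp
    also have "\<dots> = (\<Phi> t - \<Phi> (t - dt)) / dt" by (simp add: divide_simps)
    finally show ?thesis .
  qed
  ultimately have "((\<lambda>dt. (\<Phi> t - \<Phi> (t - dt)) / dt) \<longlongrightarrow> D) (at_right 0)" by simp
  then show ?thesis using L tendsto_unique trivial_limit_at_right_real by blast
qed

lemma nn_to_lim:
  fixes w G :: "pt \<Rightarrow> real" and A :: "real \<Rightarrow> pt \<Rightarrow> real"
  assumes nn: "((\<lambda>dt. \<integral>\<^sup>+x. ennreal (w x * \<bar>A dt x - G x\<bar>) \<partial>lborel) \<longlongrightarrow> 0) (at_right 0)"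
    and iA: "\<forall>\<^sub>F dt in at_right 0. integrable lborel (\<lambda>x. w x * A dt x)"
    and iG: "integrable lborel (\<lambda>x. w x * G x)" and w: "\<And>x. w x \<ge> 0"
  shows "((\<lambda>dt. \<integral>x. w x * A dt x \<partial>lborel) \<longlongrightarrow> (\<integral>x. w x * G x \<partial>lborel)) (at_right 0)"
proof -
  define R where "R dt = (\<integral>x. w x * \<bar>A dt x - G x\<bar> \<partial>lborel)" for dt
  have ev: "\<forall>\<^sub>F dt in at_right 0. (\<integral>\<^sup>+x. ennreal (w x * \<bar>A dt x - G x\<bar>) \<partial>lborel) = ennreal (R dt)
      \<and> \<bar>(\<integral>x. w x * A dt x \<partial>lborel) - (\<integral>x. w x * G x \<partial>lborel)\<bar> \<le> R dt \<and> 0 \<le> R dt"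
    using iA
  proof eventually_elim
    case (elim dt)
    have eqf: "(\<lambda>x. w x * \<bar>A dt x - G x\<bar>) = (\<lambda>x. \<bar>w x * A dt x - w x * G x\<bar>)"
      using w by (auto simp: abs_mult right_diff_distrib[symmetric])
    have int: "integrable lborel (\<lambda>x. w x * \<bar>A dt x - G x\<bar>)"
      unfolding eqf using elim iG by auto
    have "(\<integral>\<^sup>+x. ennreal (w x * \<bar>A dt x - G x\<bar>) \<partial>lborel) = ennreal (R dt)"
      unfolding R_def by (rule nn_integral_eq_integral[OF int]) (use w in simp)
    moreover have "\<bar>(\<integral>x. w x * A dt x \<partial>lborel) - (\<integral>x. w x * G x \<partial>lborel)\<bar> \<le> R dt"
    proof -
      have "(\<integral>x. w x * A dt x \<partial>lborel) - (\<integral>x. w x * G x \<partial>lborel) = (\<integral>x. w x * A dt x - w x * G x \<partial>lborel)"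
        using elim iG by simp
      also have "\<bar>\<dots>\<bar> \<le> (\<integral>x. \<bar>w x * A dt x - w x * G x\<bar> \<partial>lborel)"
        by (rule integral_abs_bound)
      finally show ?thesis unfolding R_def eqf .
    qed
    moreover have "0 \<le> R dt" unfolding R_def using w by simp
    ultimately show ?case by simp
  qed
  have e2: "\<forall>\<^sub>F dt in at_right 0. (\<integral>\<^sup>+x. ennreal (w x * \<bar>A dt x - G x\<bar>) \<partial>lborel) = ennreal (R dt)"
    using ev by (rule eventually_mono) simp
  have e3: "\<forall>\<^sub>F dt in at_right 0. 0 \<le> R dt"
    using ev by (rule eventually_mono) simp
  have "((\<lambda>dt. ennreal (R dt)) \<longlongrightarrow> 0) (at_right 0)"
    by (rule Lim_transform_eventually[OF nn e2])
  then have R0: "(R \<longlongrightarrow> 0) (at_right 0)"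
    using tendsto_ennreal_iff[OF e3, of 0] by simp
  have "((\<lambda>dt. (\<integral>x. w x * A dt x \<partial>lborel) - (\<integral>x. w x * G x \<partial>lborel)) \<longlongrightarrow> 0) (at_right 0)"
    by (rule Lim_null_comparison[OF _ R0]) (use ev in \<open>auto elim: eventually_mono\<close>)
  then show ?thesis by (simp add: LIM_zero_iff)
qed




lemma fund_pos:
  fixes H :: "pt \<Rightarrow> real"
  assumes Hc: "continuous_on UNIV H"
    and Hz: "\<And>d. d > 0 \<Longrightarrow> (\<integral>x. H x * bump x0 d x \<partial>lborel) = 0"
    and pos: "H x0 > 0"
  shows False
proof -
  have "(H \<longlongrightarrow> H x0) (at x0)" using Hc by (simp add: continuous_on_def)
  then have "\<forall>\<^sub>F y in at x0. 0 < H y" using pos by (rule order_tendstoD)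
  then obtain e where e: "e > 0" "\<And>y. y \<noteq> x0 \<Longrightarrow> dist y x0 < e \<Longrightarrow> 0 < H y"
    unfolding eventually_at by blast
  have He: "0 < H y" if "dist y x0 < e" for y
    using e(2)[of y] pos that by (cases "y = x0") auto
  define r where "r = e / 2"
  have r: "r > 0" "r < e" using e(1) unfolding r_def by auto
  define d where "d = r ^ 2"
  have d: "d > 0" using r unfolding d_def by simp
  have sd: "sqrt d = r" unfolding d_def using r by simp
  define f where "f x = H x * bump x0 d x" for x
  have fc: "continuous_on UNIV f" unfolding f_def[abs_def] using Hc bump_cont by (rule continuous_on_mult)
  have fnn: "0 \<le> f y" for y
  proof (cases "y \<in> cball x0 (sqrt d)")
    case True
    then have "dist y x0 < e" using r sd by (simp add: dist_commute)
    then show ?thesis unfolding f_def using He[of y] bump_nonneg[of x0 d y] by simp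
  next
    case False
    then show ?thesis unfolding f_def bump_def using bump_out[OF False] by simp
  qed
  have fout: "f y = 0" if "y \<notin> cball x0 (sqrt d)" for y
    unfolding f_def bump_def using bump_out[OF that] by simp
  have fint: "integrable lborel f" by (rule cont_support_integrable[OF fc compact_cball fout])
  have f0: "integral\<^sup>L lborel f = 0" unfolding f_def using Hz[OF d] .
  define a :: pt where "a = x0 - One"
  define b :: pt where "b = x0 + One"
  have fU: "(f has_integral 0) UNIV" using has_integral_integral_lborel[OF fint] f0 by simp
  have fcb: "f integrable_on cbox a b" by (rule integrable_continuous[OF continuous_on_subset[OF fc]]) simp
  have "integral (cbox a b) f \<le> integral UNIV f"
    by (rule integral_subset_le) (use fcb fU fnn in \<open>auto simp: has_integral_integrable\<close>)
  moreover have "integral UNIV f = 0" using fU by (rule integral_unique)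
  moreover have "0 \<le> integral (cbox a b) f" by (rule integral_nonneg[OF fcb]) (simp add: fnn)
  ultimately have "integral (cbox a b) f = 0" by simp
  then have "(f has_integral 0) (cbox a b)" using fcb by (metis has_integral_integral)
  then have "f x0 = 0"
  proof (rule has_integral_0_cbox_imp_0[rotated 2])
    show "continuous_on (cbox a b) f" using fc by (rule continuous_on_subset) simp
    show "0 \<le> f x" for x by (rule fnn)
    show "box a b \<noteq> {}" unfolding a_def b_def box_eq_empty by (auto simp: inner_diff_left inner_add_left)
    show "x0 \<in> cbox a b" unfolding a_def b_def mem_box by (auto simp: inner_diff_left inner_add_left)
  qed
  moreover have "0 < f x0" unfolding f_def using pos bump_center[OF d, of x0] by simp
  ultimately show False by simp
qed

lemma fund_lemma:
  fixes H :: "pt \<Rightarrow> real"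
  assumes Hc: "continuous_on UNIV H"
    and Hz: "\<And>x0 d. d > 0 \<Longrightarrow> (\<integral>x. H x * bump x0 d x \<partial>lborel) = 0"
  shows "H x = 0"
proof (rule ccontr)
  assume "H x \<noteq> 0"
  then consider "H x > 0" | "(\<lambda>y. - H y) x > 0" by fastforce
  then show False
  proof cases
    case 1 then show False using fund_pos[OF Hc Hz] by blast
  next
    case 2
    have "continuous_on UNIV (\<lambda>y. - H y)" using Hc by (rule continuous_on_minus)
    moreover have "(\<integral>y. - H y * bump x d y \<partial>lborel) = 0" if "d > 0" for d
      using Hz[OF that, of x] by simp
    ultimately show False using fund_pos[of "\<lambda>y. - H y" x] 2 by blast
  qed
qed



lemma pd_mult:
  assumes "f differentiable (at x)" "g differentiable (at x)"
  shows "pd i (\<lambda>y. f y * g y) x = pd i f x * g x + f x * pd i g x"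
proof -
  have df: "(f has_derivative frechet_derivative f (at x)) (at x)" using assms(1) frechet_derivative_works by blast
  have dg: "(g has_derivative frechet_derivative g (at x)) (at x)" using assms(2) frechet_derivative_works by blast
  have "((\<lambda>y. f y * g y) has_derivative (\<lambda>h. f x * frechet_derivative g (at x) h + frechet_derivative f (at x) h * g x)) (at x)"
    by (rule has_derivative_mult[OF df dg])
  from pd_has_derivative[OF this, of i] show ?thesis unfolding pd_def by (simp add: algebra_simps)
qed

lemma ln_has_derivative:
  fixes f :: "pt \<Rightarrow> real"
  assumes "(f has_derivative f') (at x)" "f x > 0"
  shows "((\<lambda>y. ln (f y)) has_derivative (\<lambda>h. f' h / f x)) (at x)"
proof -
  have "((\<lambda>y. ln (f y)) has_derivative (\<lambda>h. inverse (f x) * f' h)) (at x)"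
    using has_derivative_compose[OF assms(1) DERIV_ln[OF assms(2), unfolded has_field_derivative_def]] by simp
  then show ?thesis by (simp add: divide_inverse mult.commute)
qed

lemma pd_ln:
  fixes f :: "pt \<Rightarrow> real"
  assumes "f differentiable (at x)" "f x > 0"
  shows "pd i (\<lambda>y. ln (f y)) x = pd i f x / f x"
proof -
  have df: "(f has_derivative frechet_derivative f (at x)) (at x)" using assms(1) frechet_derivative_works by blast
  from pd_has_derivative[OF ln_has_derivative[OF df assms(2)], of i] show ?thesis unfolding pd_def by simp
qed

lemma ln_differentiable:
  fixes f :: "pt \<Rightarrow> real"
  assumes "f differentiable (at x)" "f x > 0"
  shows "(\<lambda>y. ln (f y)) differentiable (at x)"
proof -
  have df: "(f has_derivative frechet_derivative f (at x)) (at x)" using assms(1) frechet_derivative_works by blast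
  show ?thesis using ln_has_derivative[OF df assms(2)] unfolding differentiable_def by blast
qed

lemma bump1_out: "x \<notin> cball x0 (sqrt d) \<Longrightarrow> bump1 x0 d i x = 0"
  unfolding bump1_def using bump_out by simp
lemma bump2_out: "x \<notin> cball x0 (sqrt d) \<Longrightarrow> bump2 x0 d i j x = 0"
  unfolding bump2_def using bump_out by simp
lemma bump0_out: "x \<notin> cball x0 (sqrt d) \<Longrightarrow> bump x0 d x = 0"
  unfolding bump_def using bump_out by simp

lemma int_bump:
  assumes "continuous_on UNIV h"
  shows "integrable lborel (\<lambda>x. h x * bump x0 d x)"
    and "integrable lborel (\<lambda>x. h x * bump1 x0 d i x)"
    and "integrable lborel (\<lambda>x. h x * bump2 x0 d i j x)"
proof -
  show "integrable lborel (\<lambda>x. h x * bump x0 d x)"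
    by (rule cont_support_integrable[OF continuous_on_mult[OF assms bump_cont] compact_cball[of x0 "sqrt d"]])
       (simp add: bump0_out)
  show "integrable lborel (\<lambda>x. h x * bump1 x0 d i x)"
    by (rule cont_support_integrable[OF continuous_on_mult[OF assms bump1_cont] compact_cball[of x0 "sqrt d"]])
       (simp add: bump1_out)
  show "integrable lborel (\<lambda>x. h x * bump2 x0 d i j x)"
    by (rule cont_support_integrable[OF continuous_on_mult[OF assms bump2_cont] compact_cball[of x0 "sqrt d"]])
       (simp add: bump2_out)
qed

lemma ibp_bump:
  fixes J :: "pt \<Rightarrow> real"
  assumes dJ: "\<And>x. J differentiable (at x)" and cpJ: "continuous_on UNIV (pd i J)" and cJ: "continuous_on UNIV J"
  shows "(\<integral>x. J x * bump1 x0 d i x \<partial>lborel) = - (\<integral>x. pd i J x * bump x0 d x \<partial>lborel)"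
proof -
  define F where "F x = J x * bump x0 d x" for x
  have db: "bump x0 d differentiable (at x)" for x using bump_deriv unfolding differentiable_def by blast
  have dF: "F differentiable (at x)" for x
    unfolding F_def[abs_def] using dJ db by (rule differentiable_mult)
  have pF: "pd i F = (\<lambda>x. pd i J x * bump x0 d x + J x * bump1 x0 d i x)"
  proof
    fix x show "pd i F x = pd i J x * bump x0 d x + J x * bump1 x0 d i x"
      unfolding F_def[abs_def] using pd_mult[OF dJ db, of i] pd_bump[of i x0 d] by simp
  qed
  have i1: "integrable lborel (\<lambda>x. pd i J x * bump x0 d x)" by (rule int_bump(1)[OF cpJ])
  have i2: "integrable lborel (\<lambda>x. J x * bump1 x0 d i x)" by (rule int_bump(2)[OF cJ])
  have "integral\<^sup>L lborel (pd i F) = 0"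
  proof (rule ibp_zero[OF dF])
    show "continuous_on UNIV (pd i F)" unfolding pF
      by (intro continuous_intros cpJ cJ bump_cont bump1_cont)
    show "integrable lborel F" unfolding F_def by (rule int_bump(1)[OF cJ])
    show "integrable lborel (pd i F)" unfolding pF using i1 i2 by simp
  qed
  then have "(\<integral>x. pd i J x * bump x0 d x \<partial>lborel) + (\<integral>x. J x * bump1 x0 d i x \<partial>lborel) = 0"
    unfolding pF using i1 i2 by simp
  then show ?thesis by simp
qed




lemma gen_bump:
  assumes "ta < tb" "t \<in> {ta..tb}"
  shows "gen {ta..tb} s \<nu> b (\<lambda>x t. bump x0 d x) x t
    = (\<Sum>i\<in>UNIV. b x t $ i * bump1 x0 d i x) + s * \<nu> * (\<Sum>i\<in>UNIV. bump2 x0 d i i x)"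
proof -
  have "tder {ta..tb} (\<lambda>x t. bump x0 d x) x t = 0"
    by (rule tder_unique[OF assms]) simp
  moreover have "lap (bump x0 d) x = (\<Sum>i\<in>UNIV. bump2 x0 d i i x)"
    unfolding lap_def pd_bump pd_bump1 by simp
  ultimately show ?thesis unfolding gen_def by (simp add: pd_bump)
qed

lemma weak_plus:
  fixes \<rho> :: "pt \<Rightarrow> real \<Rightarrow> real" and p :: "real \<Rightarrow> pt \<Rightarrow> real \<Rightarrow> pt \<Rightarrow> real"
    and bp :: "pt \<Rightarrow> real \<Rightarrow> pt" and \<nu> ta tb t d :: real and x0 :: pt
  assumes tab: "ta < tb" and t: "ta \<le> t" "t < tb" and d: "d > 0"
    and rho_pos: "\<forall>t\<in>{ta..tb}. \<forall>x. \<rho> x t > 0"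
    and rho_int: "\<forall>t\<in>{ta..tb}. integrable lborel (\<lambda>x. \<rho> x t) \<and> (\<integral>x. \<rho> x t \<partial>lborel) = 1"
    and p_meas: "\<forall>s t. ta \<le> s \<and> s < t \<and> t \<le> tb \<longrightarrow>
                    (\<lambda>z. p s (fst z) t (snd z)) \<in> borel_measurable borel"
    and p_dens: "\<forall>s t x. ta \<le> s \<and> s < t \<and> t \<le> tb \<longrightarrow>
                    (\<forall>y. p s x t y \<ge> 0) \<and> integrable lborel (p s x t) \<and> (\<integral>y. p s x t y \<partial>lborel) = 1"
    and p_rho: "\<forall>s t y. ta \<le> s \<and> s < t \<and> t \<le> tb \<longrightarrow>
                    \<rho> y t = (\<integral>x. \<rho> x s * p s x t y \<partial>lborel)"
    and Dp: "((\<lambda>dt. \<integral>\<^sup>+x. ennreal (\<rho> x t *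
                     \<bar>(condF p (\<lambda>x t. bump x0 d x) t dt x - bump x0 d x) / dt - gen {ta..tb} 1 \<nu> bp (\<lambda>x t. bump x0 d x) x t\<bar>) \<partial>lborel)
                   \<longlongrightarrow> 0) (at_right 0)"
    and rc: "continuous_on (UNIV \<times> {ta..tb}) (\<lambda>(x, t). \<rho> x t)"
    and dr: "\<And>x s. s \<in> {ta..tb} \<Longrightarrow> ((\<lambda>s. \<rho> x s) has_real_derivative tder {ta..tb} \<rho> x s) (at s within {ta..tb})"
    and dc: "continuous_on (UNIV \<times> {ta..tb}) (\<lambda>(x, t). tder {ta..tb} \<rho> x t)"
    and bpc: "\<And>i. continuous_on (UNIV \<times> {ta..tb}) (\<lambda>(x, t). bp x t $ i)"
  shows "(\<integral>x. \<rho> x t * ((\<Sum>i\<in>UNIV. bp x t $ i * bump1 x0 d i x) + \<nu> * (\<Sum>i\<in>UNIV. bump2 x0 d i i x)) \<partial>lborel)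
      = (\<integral>x. tder {ta..tb} \<rho> x t * bump x0 d x \<partial>lborel)"
proof -
  let ?T = "{ta..tb}"
  let ?\<phi> = "bump x0 d"
  define Gp where "Gp x = (\<Sum>i\<in>UNIV. bp x t $ i * bump1 x0 d i x) + \<nu> * (\<Sum>i\<in>UNIV. bump2 x0 d i i x)" for x
  define \<Phi> where "\<Phi> s = (\<integral>x. \<rho> x s * bump x0 d x \<partial>lborel)" for s
  have tT: "t \<in> ?T" using t by simp
  have genG: "gen ?T 1 \<nu> bp (\<lambda>x t. bump x0 d x) x t = Gp x" for x
    unfolding Gp_def using gen_bump[OF tab tT, of 1 \<nu> bp x0 d x] by simp
  have rct: "continuous_on UNIV (\<lambda>x. \<rho> x t)" by (rule cont_slice[OF rc tT])
  have bpt: "continuous_on UNIV (\<lambda>x. bp x t $ i)" for i by (rule cont_slice[OF bpc tT])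
  have phim: "?\<phi> \<in> borel_measurable borel" by (rule borel_measurable_continuous_onI[OF bump_cont])
  have phib: "\<bar>?\<phi> y\<bar> \<le> d ^ 3" for y using bump_le[of d x0 y] bump_nonneg[of x0 d y] d by simp
  have rint: "integrable lborel (\<lambda>x. \<rho> x s)" if "s \<in> ?T" for s using rho_int that by blast
  have rpos: "\<rho> x s > 0" if "s \<in> ?T" for x s using rho_pos that by blast
  have D: "(\<Phi> has_real_derivative (\<integral>x. tder ?T \<rho> x t * bump x0 d x \<partial>lborel)) (at t within ?T)"
    unfolding \<Phi>_def by (rule Phi_deriv[OF tab tT rc dr dc bump_cont compact_cball[of x0 "sqrt d"]]) (auto simp: bump0_out)
  have iGp: "integrable lborel (\<lambda>x. \<rho> x t * Gp x)"
  proof -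
    have "(\<lambda>x. \<rho> x t * Gp x) = (\<lambda>x. (\<Sum>i\<in>UNIV. (\<rho> x t * bp x t $ i) * bump1 x0 d i x) + (\<Sum>i\<in>UNIV. (\<nu> * \<rho> x t) * bump2 x0 d i i x))"
      unfolding Gp_def by (auto simp: algebra_simps sum_distrib_left)
    moreover have "integrable lborel (\<lambda>x. (\<Sum>i\<in>UNIV. (\<rho> x t * bp x t $ i) * bump1 x0 d i x) + (\<Sum>i\<in>UNIV. (\<nu> * \<rho> x t) * bump2 x0 d i i x))"
      by (intro Bochner_Integration.integrable_add Bochner_Integration.integrable_sum int_bump continuous_intros rct bpt)
    ultimately show ?thesis by simp
  qed
  define A where "A dt x = (condF p (\<lambda>x t. bump x0 d x) t dt x - bump x0 d x) / dt" for dt x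
  have ev: "\<forall>\<^sub>F dt in at_right 0. 0 < dt \<and> dt < tb - t"
    using t by (auto simp: eventually_at_right_field intro!: exI[of _ "tb - t"])
  have evF: "\<forall>\<^sub>F dt in at_right 0. integrable lborel (\<lambda>x. \<rho> x t * A dt x)
      \<and> (\<integral>x. \<rho> x t * A dt x \<partial>lborel) = (\<Phi> (t + dt) - \<Phi> t) / dt"
    using ev
  proof eventually_elim
    case (elim dt)
    have st: "ta \<le> t \<and> t < t + dt \<and> t + dt \<le> tb" using elim t by auto
    have tdT: "t + dt \<in> ?T" using st t by auto
    have cF: "condF p (\<lambda>x t. bump x0 d x) t dt x = (\<integral>y. ?\<phi> y * p t x (t + dt) y \<partial>lborel)" for x
      unfolding condF_def by simp
    note FF = fwd_fubini[of "\<lambda>x y. p t x (t + dt) y" "\<lambda>x. \<rho> x t" ?\<phi> "d ^ 3",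
        OF p_meas[rule_format, OF st] p_dens[rule_format, OF st] rint[OF tT] less_imp_le[OF rpos[OF tT]] phim phib]
    have i1: "integrable lborel (\<lambda>x. \<rho> x t * condF p (\<lambda>x t. bump x0 d x) t dt x)"
      unfolding cF using FF(1) .
    have i2: "integrable lborel (\<lambda>x. \<rho> x t * ?\<phi> x)" by (rule int_bump(1)[OF rct])
    have eqA: "(\<lambda>x. \<rho> x t * A dt x) = (\<lambda>x. (\<rho> x t * condF p (\<lambda>x t. bump x0 d x) t dt x - \<rho> x t * ?\<phi> x) / dt)"
      unfolding A_def by (auto simp: algebra_simps)
    have "integrable lborel (\<lambda>x. \<rho> x t * A dt x)" unfolding eqA using i1 i2 by simp
    moreover have "(\<integral>x. \<rho> x t * A dt x \<partial>lborel) = (\<Phi> (t + dt) - \<Phi> t) / dt"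
    proof -
      have "(\<integral>x. \<rho> x t * A dt x \<partial>lborel) = ((\<integral>x. \<rho> x t * condF p (\<lambda>x t. bump x0 d x) t dt x \<partial>lborel) - (\<integral>x. \<rho> x t * ?\<phi> x \<partial>lborel)) / dt"
        unfolding eqA using i1 i2 by simp
      also have "(\<integral>x. \<rho> x t * condF p (\<lambda>x t. bump x0 d x) t dt x \<partial>lborel) = (\<integral>y. ?\<phi> y * \<rho> y (t + dt) \<partial>lborel)"
        unfolding cF FF(2) using p_rho[rule_format, OF st] by simp
      also have "\<dots> = \<Phi> (t + dt)" unfolding \<Phi>_def by (simp add: mult.commute)
      finally show ?thesis unfolding \<Phi>_def by simp
    qed
    ultimately show ?case by simp
  qed
  have lim: "((\<lambda>dt. \<integral>x. \<rho> x t * A dt x \<partial>lborel) \<longlongrightarrow> (\<integral>x. \<rho> x t * Gp x \<partial>lborel)) (at_right 0)"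
  proof (rule nn_to_lim)
    show "((\<lambda>dt. \<integral>\<^sup>+x. ennreal (\<rho> x t * \<bar>A dt x - Gp x\<bar>) \<partial>lborel) \<longlongrightarrow> 0) (at_right 0)"
      using Dp unfolding A_def genG .
    show "\<forall>\<^sub>F dt in at_right 0. integrable lborel (\<lambda>x. \<rho> x t * A dt x)"
      using evF by (rule eventually_mono) simp
    show "integrable lborel (\<lambda>x. \<rho> x t * Gp x)" by (rule iGp)
    show "0 \<le> \<rho> x t" for x using rpos[OF tT] less_imp_le by blast
  qed
  have "((\<lambda>dt. (\<Phi> (t + dt) - \<Phi> t) / dt) \<longlongrightarrow> (\<integral>x. \<rho> x t * Gp x \<partial>lborel)) (at_right 0)"
    by (rule Lim_transform_eventually[OF lim]) (use evF in \<open>auto elim: eventually_mono\<close>)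
  from right_deriv_eq[OF D t this] show ?thesis unfolding Gp_def .
qed


lemma weak_minus:
  fixes \<rho> :: "pt \<Rightarrow> real \<Rightarrow> real" and p :: "real \<Rightarrow> pt \<Rightarrow> real \<Rightarrow> pt \<Rightarrow> real"
    and bm :: "pt \<Rightarrow> real \<Rightarrow> pt" and \<nu> ta tb t d :: real and x0 :: pt
  assumes tab: "ta < tb" and t: "ta < t" "t \<le> tb" and d: "d > 0"
    and rho_pos: "\<forall>t\<in>{ta..tb}. \<forall>x. \<rho> x t > 0"
    and rho_int: "\<forall>t\<in>{ta..tb}. integrable lborel (\<lambda>x. \<rho> x t) \<and> (\<integral>x. \<rho> x t \<partial>lborel) = 1"
    and p_meas: "\<forall>s t. ta \<le> s \<and> s < t \<and> t \<le> tb \<longrightarrow>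
                    (\<lambda>z. p s (fst z) t (snd z)) \<in> borel_measurable borel"
    and p_dens: "\<forall>s t x. ta \<le> s \<and> s < t \<and> t \<le> tb \<longrightarrow>
                    (\<forall>y. p s x t y \<ge> 0) \<and> integrable lborel (p s x t) \<and> (\<integral>y. p s x t y \<partial>lborel) = 1"
    and Dm: "((\<lambda>dt. \<integral>\<^sup>+x. ennreal (\<rho> x t *
                     \<bar>(bump x0 d x - condB \<rho> p (\<lambda>x t. bump x0 d x) t dt x) / dt - gen {ta..tb} (-1) \<nu> bm (\<lambda>x t. bump x0 d x) x t\<bar>) \<partial>lborel)
                   \<longlongrightarrow> 0) (at_right 0)"
    and rc: "continuous_on (UNIV \<times> {ta..tb}) (\<lambda>(x, t). \<rho> x t)"
    and dr: "\<And>x s. s \<in> {ta..tb} \<Longrightarrow> ((\<lambda>s. \<rho> x s) has_real_derivative tder {ta..tb} \<rho> x s) (at s within {ta..tb})"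
    and dc: "continuous_on (UNIV \<times> {ta..tb}) (\<lambda>(x, t). tder {ta..tb} \<rho> x t)"
    and bmc: "\<And>i. continuous_on (UNIV \<times> {ta..tb}) (\<lambda>(x, t). bm x t $ i)"
  shows "(\<integral>x. \<rho> x t * ((\<Sum>i\<in>UNIV. bm x t $ i * bump1 x0 d i x) - \<nu> * (\<Sum>i\<in>UNIV. bump2 x0 d i i x)) \<partial>lborel)
      = (\<integral>x. tder {ta..tb} \<rho> x t * bump x0 d x \<partial>lborel)"
proof -
  let ?T = "{ta..tb}"
  let ?\<phi> = "bump x0 d"
  define Gm where "Gm x = (\<Sum>i\<in>UNIV. bm x t $ i * bump1 x0 d i x) - \<nu> * (\<Sum>i\<in>UNIV. bump2 x0 d i i x)" for x
  define \<Phi> where "\<Phi> s = (\<integral>x. \<rho> x s * bump x0 d x \<partial>lborel)" for s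
  have tT: "t \<in> ?T" using t by simp
  have genG: "gen ?T (-1) \<nu> bm (\<lambda>x t. bump x0 d x) x t = Gm x" for x
    unfolding Gm_def using gen_bump[OF tab tT, of "-1" \<nu> bm x0 d x] by simp
  have rct: "continuous_on UNIV (\<lambda>x. \<rho> x t)" by (rule cont_slice[OF rc tT])
  have bmt: "continuous_on UNIV (\<lambda>x. bm x t $ i)" for i by (rule cont_slice[OF bmc tT])
  have phim: "?\<phi> \<in> borel_measurable borel" by (rule borel_measurable_continuous_onI[OF bump_cont])
  have phib: "\<bar>?\<phi> y\<bar> \<le> d ^ 3" for y using bump_le[of d x0 y] bump_nonneg[of x0 d y] d by simp
  have rint: "integrable lborel (\<lambda>x. \<rho> x s)" if "s \<in> ?T" for s using rho_int that by blast
  have rpos: "\<rho> x s > 0" if "s \<in> ?T" for x s using rho_pos that by blast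
  have D: "(\<Phi> has_real_derivative (\<integral>x. tder ?T \<rho> x t * bump x0 d x \<partial>lborel)) (at t within ?T)"
    unfolding \<Phi>_def by (rule Phi_deriv[OF tab tT rc dr dc bump_cont compact_cball[of x0 "sqrt d"]]) (auto simp: bump0_out)
  have iGm: "integrable lborel (\<lambda>x. \<rho> x t * Gm x)"
  proof -
    have "(\<lambda>x. \<rho> x t * Gm x) = (\<lambda>x. (\<Sum>i\<in>UNIV. (\<rho> x t * bm x t $ i) * bump1 x0 d i x) - (\<Sum>i\<in>UNIV. (\<nu> * \<rho> x t) * bump2 x0 d i i x))"
      unfolding Gm_def by (auto simp: algebra_simps sum_distrib_left)
    moreover have "integrable lborel (\<lambda>x. (\<Sum>i\<in>UNIV. (\<rho> x t * bm x t $ i) * bump1 x0 d i x) - (\<Sum>i\<in>UNIV. (\<nu> * \<rho> x t) * bump2 x0 d i i x))"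
      by (intro Bochner_Integration.integrable_diff Bochner_Integration.integrable_sum int_bump continuous_intros rct bmt)
    ultimately show ?thesis by simp
  qed
  define A where "A dt x = (bump x0 d x - condB \<rho> p (\<lambda>x t. bump x0 d x) t dt x) / dt" for dt x
  have ev: "\<forall>\<^sub>F dt in at_right 0. 0 < dt \<and> dt < t - ta"
    using t by (auto simp: eventually_at_right_field intro!: exI[of _ "t - ta"])
  have evF: "\<forall>\<^sub>F dt in at_right 0. integrable lborel (\<lambda>x. \<rho> x t * A dt x)
      \<and> (\<integral>x. \<rho> x t * A dt x \<partial>lborel) = (\<Phi> t - \<Phi> (t - dt)) / dt"
    using ev
  proof eventually_elim
    case (elim dt)
    have st: "ta \<le> t - dt \<and> t - dt < t \<and> t \<le> tb" using elim t by auto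
    have tdT: "t - dt \<in> ?T" using st t by auto
    have cB: "\<rho> x t * condB \<rho> p (\<lambda>x t. bump x0 d x) t dt x = (\<integral>y. ?\<phi> y * \<rho> y (t - dt) * p (t - dt) y t x \<partial>lborel)" for x
    proof -
      have "\<rho> x t * condB \<rho> p (\<lambda>x t. bump x0 d x) t dt x = (\<integral>y. \<rho> x t * (?\<phi> y * (p (t - dt) y t x * \<rho> y (t - dt) / \<rho> x t)) \<partial>lborel)"
        unfolding condB_def pback_def by simp
      also have "\<dots> = (\<integral>y. ?\<phi> y * \<rho> y (t - dt) * p (t - dt) y t x \<partial>lborel)"
        using rpos[OF tT, of x] by (intro Bochner_Integration.integral_cong) (auto simp: field_simps)
      finally show ?thesis .
    qed
    note BF = bwd_fubini[of "\<lambda>y x. p (t - dt) y t x" "\<lambda>x. \<rho> x (t - dt)" ?\<phi> "d ^ 3",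
        OF p_meas[rule_format, OF st] p_dens[rule_format, OF st] rint[OF tdT] less_imp_le[OF rpos[OF tdT]] phim phib]
    have i1: "integrable lborel (\<lambda>x. \<rho> x t * condB \<rho> p (\<lambda>x t. bump x0 d x) t dt x)"
      unfolding cB using BF(1) .
    have i2: "integrable lborel (\<lambda>x. \<rho> x t * ?\<phi> x)" by (rule int_bump(1)[OF rct])
    have eqA: "(\<lambda>x. \<rho> x t * A dt x) = (\<lambda>x. (\<rho> x t * ?\<phi> x - \<rho> x t * condB \<rho> p (\<lambda>x t. bump x0 d x) t dt x) / dt)"
      unfolding A_def by (auto simp: algebra_simps)
    have "integrable lborel (\<lambda>x. \<rho> x t * A dt x)" unfolding eqA using i1 i2 by simp
    moreover have "(\<integral>x. \<rho> x t * A dt x \<partial>lborel) = (\<Phi> t - \<Phi> (t - dt)) / dt"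
    proof -
      have "(\<integral>x. \<rho> x t * A dt x \<partial>lborel) = ((\<integral>x. \<rho> x t * ?\<phi> x \<partial>lborel) - (\<integral>x. \<rho> x t * condB \<rho> p (\<lambda>x t. bump x0 d x) t dt x \<partial>lborel)) / dt"
        unfolding eqA using i1 i2 by simp
      also have "(\<integral>x. \<rho> x t * condB \<rho> p (\<lambda>x t. bump x0 d x) t dt x \<partial>lborel) = (\<integral>y. ?\<phi> y * \<rho> y (t - dt) \<partial>lborel)"
        unfolding cB BF(2) ..
      also have "\<dots> = \<Phi> (t - dt)" unfolding \<Phi>_def by (simp add: mult.commute)
      finally show ?thesis unfolding \<Phi>_def by simp
    qed
    ultimately show ?case by simp
  qed
  have lim: "((\<lambda>dt. \<integral>x. \<rho> x t * A dt x \<partial>lborel) \<longlongrightarrow> (\<integral>x. \<rho> x t * Gm x \<partial>lborel)) (at_right 0)"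
  proof (rule nn_to_lim)
    show "((\<lambda>dt. \<integral>\<^sup>+x. ennreal (\<rho> x t * \<bar>A dt x - Gm x\<bar>) \<partial>lborel) \<longlongrightarrow> 0) (at_right 0)"
      using Dm unfolding A_def genG .
    show "\<forall>\<^sub>F dt in at_right 0. integrable lborel (\<lambda>x. \<rho> x t * A dt x)"
      using evF by (rule eventually_mono) simp
    show "integrable lborel (\<lambda>x. \<rho> x t * Gm x)" by (rule iGm)
    show "0 \<le> \<rho> x t" for x using rpos[OF tT] less_imp_le by blast
  qed
  have "((\<lambda>dt. (\<Phi> t - \<Phi> (t - dt)) / dt) \<longlongrightarrow> (\<integral>x. \<rho> x t * Gm x \<partial>lborel)) (at_right 0)"
    by (rule Lim_transform_eventually[OF lim]) (use evF in \<open>auto elim: eventually_mono\<close>)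
  from left_deriv_eq[OF D t this] show ?thesis unfolding Gm_def .
qed


lemma J_facts:
  fixes r c :: "pt \<Rightarrow> real"
  assumes dr: "\<And>x. r differentiable (at x)" and dc: "\<And>x. c differentiable (at x)"
    and cr: "continuous_on UNIV (pd i r)" and cc: "continuous_on UNIV (pd i c)"
  shows "(\<lambda>y. r y * c y) differentiable (at x)"
    and "pd i (\<lambda>y. r y * c y) = (\<lambda>x. pd i r x * c x + r x * pd i c x)"
    and "continuous_on UNIV (pd i (\<lambda>y. r y * c y))"
    and "continuous_on UNIV (\<lambda>y. r y * c y)"
    and "continuous_on UNIV r" and "continuous_on UNIV c"
proof -
  show cr0: "continuous_on UNIV r" using dr by (simp add: continuous_at_imp_continuous_on differentiable_imp_continuous_within)
  show cc0: "continuous_on UNIV c" using dc by (simp add: continuous_at_imp_continuous_on differentiable_imp_continuous_within)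
  show "(\<lambda>y. r y * c y) differentiable (at x)" using dr dc by (rule differentiable_mult)
  show pe: "pd i (\<lambda>y. r y * c y) = (\<lambda>x. pd i r x * c x + r x * pd i c x)"
    using pd_mult[OF dr dc] by blast
  show "continuous_on UNIV (pd i (\<lambda>y. r y * c y))" unfolding pe
    by (intro continuous_intros cr cc cr0 cc0)
  show "continuous_on UNIV (\<lambda>y. r y * c y)" by (intro continuous_intros cr0 cc0)
qed


lemma FP_at:
  fixes r dr :: "pt \<Rightarrow> real" and bp bm :: "pt \<Rightarrow> pt" and \<nu> :: real
  assumes Wp: "\<And>x0 d. d > 0 \<Longrightarrow> (\<integral>x. r x * ((\<Sum>i\<in>UNIV. bp x $ i * bump1 x0 d i x) + \<nu> * (\<Sum>i\<in>UNIV. bump2 x0 d i i x)) \<partial>lborel)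
      = (\<integral>x. dr x * bump x0 d x \<partial>lborel)"
    and Wm: "\<And>x0 d. d > 0 \<Longrightarrow> (\<integral>x. r x * ((\<Sum>i\<in>UNIV. bm x $ i * bump1 x0 d i x) - \<nu> * (\<Sum>i\<in>UNIV. bump2 x0 d i i x)) \<partial>lborel)
      = (\<integral>x. dr x * bump x0 d x \<partial>lborel)"
    and drr: "\<And>x. r differentiable (at x)"
    and dbp: "\<And>i x. (\<lambda>y. bp y $ i) differentiable (at x)"
    and dbm: "\<And>i x. (\<lambda>y. bm y $ i) differentiable (at x)"
    and cpr: "\<And>i. continuous_on UNIV (pd i r)"
    and cpbp: "\<And>i. continuous_on UNIV (pd i (\<lambda>y. bp y $ i))"
    and cpbm: "\<And>i. continuous_on UNIV (pd i (\<lambda>y. bm y $ i))"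
    and cdr: "continuous_on UNIV dr"
  shows "dr x + 1/2 * (\<Sum>i\<in>UNIV. pd i (\<lambda>y. r y * bp y $ i) x + pd i (\<lambda>y. r y * bm y $ i) x) = 0"
proof -
  note JP = J_facts[OF drr dbp cpr cpbp]
  note JM = J_facts[OF drr dbm cpr cpbm]
  define H where "H x = dr x + 1/2 * (\<Sum>i\<in>UNIV. pd i (\<lambda>y. r y * bp y $ i) x + pd i (\<lambda>y. r y * bm y $ i) x)" for x
  have Hc: "continuous_on UNIV H"
    unfolding H_def[abs_def] by (intro continuous_intros cdr JP(3) JM(3))
  have "H x = 0"
  proof (rule fund_lemma[OF Hc])
    fix x0 :: pt and d :: real
    assume d: "d > 0"
    define D where "D = (\<integral>x. dr x * bump x0 d x \<partial>lborel)"
    define P where "P i = (\<integral>x. pd i (\<lambda>y. r y * bp y $ i) x * bump x0 d x \<partial>lborel)" for i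
    define M where "M i = (\<integral>x. pd i (\<lambda>y. r y * bm y $ i) x * bump x0 d x \<partial>lborel)" for i
    have ibpP: "(\<integral>x. (r x * bp x $ i) * bump1 x0 d i x \<partial>lborel) = - P i" for i
      unfolding P_def by (rule ibp_bump[OF JP(1) JP(3) JP(4)])
    have ibpM: "(\<integral>x. (r x * bm x $ i) * bump1 x0 d i x \<partial>lborel) = - M i" for i
      unfolding M_def by (rule ibp_bump[OF JM(1) JM(3) JM(4)])
    have iP: "integrable lborel (\<lambda>x. (r x * bp x $ i) * bump1 x0 d i x)" for i
      by (rule int_bump(2)[OF JP(4)])
    have iM: "integrable lborel (\<lambda>x. (r x * bm x $ i) * bump1 x0 d i x)" for i
      by (rule int_bump(2)[OF JM(4)])
    have iL: "integrable lborel (\<lambda>x. (\<nu> * r x) * bump2 x0 d i i x)" for i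
      by (rule int_bump(3)) (intro continuous_intros JP(5))
    have eqp: "(\<lambda>x. r x * ((\<Sum>i\<in>UNIV. bp x $ i * bump1 x0 d i x) + \<nu> * (\<Sum>i\<in>UNIV. bump2 x0 d i i x)))
        = (\<lambda>x. (\<Sum>i\<in>UNIV. (r x * bp x $ i) * bump1 x0 d i x) + (\<Sum>i\<in>UNIV. (\<nu> * r x) * bump2 x0 d i i x))"
      by (auto simp: algebra_simps sum_distrib_left)
    have eqm: "(\<lambda>x. r x * ((\<Sum>i\<in>UNIV. bm x $ i * bump1 x0 d i x) - \<nu> * (\<Sum>i\<in>UNIV. bump2 x0 d i i x)))
        = (\<lambda>x. (\<Sum>i\<in>UNIV. (r x * bm x $ i) * bump1 x0 d i x) - (\<Sum>i\<in>UNIV. (\<nu> * r x) * bump2 x0 d i i x))"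
      by (auto simp: algebra_simps sum_distrib_left)
    have "D = (\<integral>x. (\<Sum>i\<in>UNIV. (r x * bp x $ i) * bump1 x0 d i x) + (\<Sum>i\<in>UNIV. (\<nu> * r x) * bump2 x0 d i i x) \<partial>lborel)"
      using Wp[of d x0, OF d] unfolding D_def eqp by simp
    also have "\<dots> = (\<Sum>i\<in>UNIV. \<integral>x. (r x * bp x $ i) * bump1 x0 d i x \<partial>lborel) + (\<Sum>i\<in>UNIV. \<integral>x. (\<nu> * r x) * bump2 x0 d i i x \<partial>lborel)"
      by (simp add: Bochner_Integration.integral_add Bochner_Integration.integral_sum Bochner_Integration.integrable_sum iP iL)
    finally have e1: "D = (\<Sum>i\<in>UNIV. - P i) + (\<Sum>i\<in>UNIV. \<integral>x. (\<nu> * r x) * bump2 x0 d i i x \<partial>lborel)"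
      by (simp add: ibpP)
    have "D = (\<integral>x. (\<Sum>i\<in>UNIV. (r x * bm x $ i) * bump1 x0 d i x) - (\<Sum>i\<in>UNIV. (\<nu> * r x) * bump2 x0 d i i x) \<partial>lborel)"
      using Wm[of d x0, OF d] unfolding D_def eqm by simp
    also have "\<dots> = (\<Sum>i\<in>UNIV. \<integral>x. (r x * bm x $ i) * bump1 x0 d i x \<partial>lborel) - (\<Sum>i\<in>UNIV. \<integral>x. (\<nu> * r x) * bump2 x0 d i i x \<partial>lborel)"
      by (simp add: Bochner_Integration.integral_diff Bochner_Integration.integral_sum Bochner_Integration.integrable_sum iM iL)
    finally have e2: "D = (\<Sum>i\<in>UNIV. - M i) - (\<Sum>i\<in>UNIV. \<integral>x. (\<nu> * r x) * bump2 x0 d i i x \<partial>lborel)"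
      by (simp add: ibpM)
    have "2 * D = (\<Sum>i\<in>UNIV. - P i) + (\<Sum>i\<in>UNIV. - M i)" using e1 e2 by linarith
    then have DD: "2 * D = - (\<Sum>i\<in>UNIV. P i + M i)"
      by (simp add: sum.distrib sum_negf)
    have iPP: "integrable lborel (\<lambda>x. pd i (\<lambda>y. r y * bp y $ i) x * bump x0 d x)" for i
      by (rule int_bump(1)[OF JP(3)])
    have iMM: "integrable lborel (\<lambda>x. pd i (\<lambda>y. r y * bm y $ i) x * bump x0 d x)" for i
      by (rule int_bump(1)[OF JM(3)])
    have iD: "integrable lborel (\<lambda>x. dr x * bump x0 d x)" by (rule int_bump(1)[OF cdr])
    have "(\<lambda>x. H x * bump x0 d x) = (\<lambda>x. dr x * bump x0 d x + 1/2 * (\<Sum>i\<in>UNIV. pd i (\<lambda>y. r y * bp y $ i) x * bump x0 d x + pd i (\<lambda>y. r y * bm y $ i) x * bump x0 d x))"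
      unfolding H_def by (auto simp: algebra_simps sum_distrib_left sum_distrib_right)
    then have "(\<integral>x. H x * bump x0 d x \<partial>lborel) = D + 1/2 * (\<Sum>i\<in>UNIV. P i + M i)"
      unfolding D_def P_def M_def
      by (simp add: Bochner_Integration.integral_add Bochner_Integration.integral_sum Bochner_Integration.integrable_sum iPP iMM iD)
    then show "(\<integral>x. H x * bump x0 d x \<partial>lborel) = 0" using DD by simp
  qed
  then show ?thesis unfolding H_def .
qed




lemma int_by_bound:
  fixes f g :: "pt \<Rightarrow> real"
  assumes "integrable lborel g" "continuous_on UNIV f" "\<And>x. \<bar>f x\<bar> \<le> g x"
  shows "integrable lborel f"
proof (rule Bochner_Integration.integrable_bound[OF assms(1)])
  show "f \<in> borel_measurable lborel" using borel_measurable_continuous_onI[OF assms(2)] by simp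
  show "AE x in lborel. norm (f x) \<le> norm (g x)"
  proof (rule AE_I2)
    fix x show "norm (f x) \<le> norm (g x)" using assms(3)[of x] abs_ge_self[of "g x"] by simp
  qed
qed

lemma b_part:
  fixes r c g :: "pt \<Rightarrow> real"
  assumes dr: "\<And>x. r differentiable (at x)" and rpos: "\<And>x. r x > 0"
    and dc: "\<And>x. c differentiable (at x)"
    and cpr: "continuous_on UNIV (pd i r)" and cpc: "continuous_on UNIV (pd i c)"
    and g: "integrable lborel g"
    and b1: "\<And>x. \<bar>r x * c x\<bar> * (1 + \<bar>ln (r x)\<bar>) \<le> g x"
    and b2: "\<And>x. \<bar>pd i r x * c x + r x * pd i c x\<bar> * (1 + \<bar>ln (r x)\<bar>) \<le> g x"
    and b3: "\<And>x. \<bar>c x * pd i r x\<bar> \<le> g x"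
  shows "integrable lborel (\<lambda>x. (pd i r x * c x + r x * pd i c x) * (ln (r x) + 1))"
    and "integrable lborel (\<lambda>x. r x * pd i c x)"
    and "(\<integral>x. (pd i r x * c x + r x * pd i c x) * (ln (r x) + 1) \<partial>lborel) = (\<integral>x. r x * pd i c x \<partial>lborel)"
proof -
  note J = J_facts[OF dr dc cpr cpc]
  define P where "P x = pd i r x * c x + r x * pd i c x" for x
  define L where "L x = ln (r x) + 1" for x
  have Pc: "continuous_on UNIV P" unfolding P_def[abs_def] by (intro continuous_intros cpr cpc J(5) J(6))
  have rne: "r x \<noteq> 0" for x using rpos[of x] by simp
  have Lc: "continuous_on UNIV L" unfolding L_def[abs_def]
    by (intro continuous_intros J(5)) (simp add: rne)
  have dL: "L differentiable (at x)" for x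
    unfolding L_def[abs_def] using ln_differentiable[OF dr rpos] differentiable_const by (rule differentiable_add)
  have pL: "pd i L x = pd i r x / r x" for x
  proof -
    have df: "(r has_derivative frechet_derivative r (at x)) (at x)" using dr frechet_derivative_works by blast
    have "(L has_derivative (\<lambda>h. frechet_derivative r (at x) h / r x)) (at x)"
      unfolding L_def[abs_def] by (rule has_derivative_add_const[OF ln_has_derivative[OF df rpos]])
    from pd_has_derivative[OF this, of i] show ?thesis unfolding pd_def by simp
  qed
  have bL: "\<bar>L x\<bar> \<le> 1 + \<bar>ln (r x)\<bar>" for x unfolding L_def by simp
  define F where "F x = (r x * c x) * L x" for x
  have dF: "F differentiable (at x)" for x unfolding F_def[abs_def] using J(1) dL by (rule differentiable_mult)
  have pF: "pd i F = (\<lambda>x. P x * L x + c x * pd i r x)"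
  proof
    fix x
    have "pd i F x = pd i (\<lambda>y. r y * c y) x * L x + (r x * c x) * pd i L x"
      unfolding F_def[abs_def] using pd_mult[OF J(1) dL] by simp
    also have "\<dots> = P x * L x + c x * pd i r x"
      unfolding J(2) P_def pL using rpos[of x] by (simp add: field_simps)
    finally show "pd i F x = P x * L x + c x * pd i r x" .
  qed
  have iPL: "integrable lborel (\<lambda>x. P x * L x)"
  proof (rule int_by_bound[OF g])
    show "continuous_on UNIV (\<lambda>x. P x * L x)" by (intro continuous_intros Pc Lc)
    show "\<bar>P x * L x\<bar> \<le> g x" for x
    proof -
      have "\<bar>P x * L x\<bar> \<le> \<bar>P x\<bar> * (1 + \<bar>ln (r x)\<bar>)" unfolding abs_mult by (rule mult_left_mono[OF bL]) simp
      then show ?thesis using b2[of x] unfolding P_def by simp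
    qed
  qed
  have icr: "integrable lborel (\<lambda>x. c x * pd i r x)"
    by (rule int_by_bound[OF g]) (intro continuous_intros J(6) cpr, rule b3)
  have iF: "integrable lborel F"
  proof (rule int_by_bound[OF g])
    show "continuous_on UNIV F" unfolding F_def[abs_def] by (intro continuous_intros J(5) J(6) Lc)
    show "\<bar>F x\<bar> \<le> g x" for x
    proof -
      have "\<bar>F x\<bar> \<le> \<bar>r x * c x\<bar> * (1 + \<bar>ln (r x)\<bar>)" unfolding F_def abs_mult[of "r x * c x"]
        by (rule mult_left_mono[OF bL]) simp
      then show ?thesis using b1[of x] by simp
    qed
  qed
  have "integral\<^sup>L lborel (pd i F) = 0"
  proof (rule ibp_zero[OF dF])
    show "continuous_on UNIV (pd i F)" unfolding pF by (intro continuous_intros Pc Lc J(6) cpr)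
    show "integrable lborel F" by (rule iF)
    show "integrable lborel (pd i F)" unfolding pF using iPL icr by simp
  qed
  then have e1: "(\<integral>x. P x * L x \<partial>lborel) + (\<integral>x. c x * pd i r x \<partial>lborel) = 0"
    unfolding pF using iPL icr by simp
  have iP: "integrable lborel P"
  proof (rule int_by_bound[OF g Pc])
    show "\<bar>P x\<bar> \<le> g x" for x
    proof -
      have "\<bar>P x\<bar> \<le> \<bar>P x\<bar> * (1 + \<bar>ln (r x)\<bar>)" by (simp add: mult_le_cancel_left1)
      then show ?thesis using b2[of x] unfolding P_def by simp
    qed
  qed
  have "integral\<^sup>L lborel (pd i (\<lambda>y. r y * c y)) = 0"
  proof (rule ibp_zero[OF J(1) J(3)])
    show "integrable lborel (\<lambda>y. r y * c y)"
    proof (rule int_by_bound[OF g J(4)])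
      show "\<bar>r x * c x\<bar> \<le> g x" for x
      proof -
        have "\<bar>r x * c x\<bar> \<le> \<bar>r x * c x\<bar> * (1 + \<bar>ln (r x)\<bar>)" by (simp add: mult_le_cancel_left1)
        then show ?thesis using b1[of x] by simp
      qed
    qed
    show "integrable lborel (pd i (\<lambda>y. r y * c y))" using iP unfolding J(2) P_def[abs_def] .
  qed
  then have e2: "integral\<^sup>L lborel P = 0" unfolding J(2) P_def[abs_def] .
  have erp: "(\<lambda>x. r x * pd i c x) = (\<lambda>x. P x - c x * pd i r x)" unfolding P_def by (auto simp: algebra_simps)
  show "integrable lborel (\<lambda>x. (pd i r x * c x + r x * pd i c x) * (ln (r x) + 1))"
    using iPL unfolding P_def L_def .
  show "integrable lborel (\<lambda>x. r x * pd i c x)" unfolding erp using iP icr by simp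
  have "(\<integral>x. r x * pd i c x \<partial>lborel) = integral\<^sup>L lborel P - (\<integral>x. c x * pd i r x \<partial>lborel)"
    unfolding erp using iP icr by simp
  also have "\<dots> = (\<integral>x. P x * L x \<partial>lborel)" using e1 e2 by simp
  finally show "(\<integral>x. (pd i r x * c x + r x * pd i c x) * (ln (r x) + 1) \<partial>lborel) = (\<integral>x. r x * pd i c x \<partial>lborel)"
    unfolding P_def L_def by simp
qed


lemma ent_rate:
  fixes r dr g :: "pt \<Rightarrow> real" and bp bm :: "pt \<Rightarrow> pt"
  assumes FP: "\<And>x. dr x + 1/2 * (\<Sum>i\<in>UNIV. pd i (\<lambda>y. r y * bp y $ i) x + pd i (\<lambda>y. r y * bm y $ i) x) = 0"
    and drr: "\<And>x. r differentiable (at x)" and rpos: "\<And>x. r x > 0"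
    and dbp: "\<And>i x. (\<lambda>y. bp y $ i) differentiable (at x)"
    and dbm: "\<And>i x. (\<lambda>y. bm y $ i) differentiable (at x)"
    and cpr: "\<And>i. continuous_on UNIV (pd i r)"
    and cpbp: "\<And>i. continuous_on UNIV (pd i (\<lambda>y. bp y $ i))"
    and cpbm: "\<And>i. continuous_on UNIV (pd i (\<lambda>y. bm y $ i))"
    and g: "integrable lborel g"
    and bp1: "\<And>x i. \<bar>r x * bp x $ i\<bar> * (1 + \<bar>ln (r x)\<bar>) \<le> g x"
    and bp2: "\<And>x i. \<bar>pd i r x * bp x $ i + r x * pd i (\<lambda>y. bp y $ i) x\<bar> * (1 + \<bar>ln (r x)\<bar>) \<le> g x"
    and bp3: "\<And>x i. \<bar>bp x $ i * pd i r x\<bar> \<le> g x"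
    and bm1: "\<And>x i. \<bar>r x * bm x $ i\<bar> * (1 + \<bar>ln (r x)\<bar>) \<le> g x"
    and bm2: "\<And>x i. \<bar>pd i r x * bm x $ i + r x * pd i (\<lambda>y. bm y $ i) x\<bar> * (1 + \<bar>ln (r x)\<bar>) \<le> g x"
    and bm3: "\<And>x i. \<bar>bm x $ i * pd i r x\<bar> \<le> g x"
  shows "integrable lborel (\<lambda>x. dr x * (ln (r x) + 1))"
    and "integrable lborel (\<lambda>x. r x * ((\<Sum>i\<in>UNIV. pd i (\<lambda>y. bp y $ i) x) + (\<Sum>i\<in>UNIV. pd i (\<lambda>y. bm y $ i) x)))"
    and "(\<integral>x. dr x * (ln (r x) + 1) \<partial>lborel)
       = - 1/2 * (\<integral>x. r x * ((\<Sum>i\<in>UNIV. pd i (\<lambda>y. bp y $ i) x) + (\<Sum>i\<in>UNIV. pd i (\<lambda>y. bm y $ i) x)) \<partial>lborel)"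
proof -
  note BP = b_part[OF drr rpos dbp cpr cpbp g bp1 bp2 bp3]
  note BM = b_part[OF drr rpos dbm cpr cpbm g bm1 bm2 bm3]
  define Pp where "Pp i x = (pd i r x * bp x $ i + r x * pd i (\<lambda>y. bp y $ i) x) * (ln (r x) + 1)" for i x
  define Pm where "Pm i x = (pd i r x * bm x $ i + r x * pd i (\<lambda>y. bm y $ i) x) * (ln (r x) + 1)" for i x
  have JP: "pd i (\<lambda>y. r y * bp y $ i) x = pd i r x * bp x $ i + r x * pd i (\<lambda>y. bp y $ i) x" for i x
    using J_facts(2)[OF drr dbp cpr cpbp, of i] by simp
  have JM: "pd i (\<lambda>y. r y * bm y $ i) x = pd i r x * bm x $ i + r x * pd i (\<lambda>y. bm y $ i) x" for i x
    using J_facts(2)[OF drr dbm cpr cpbm, of i] by simp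
  have eqd: "(\<lambda>x. dr x * (ln (r x) + 1)) = (\<lambda>x. - 1/2 * (\<Sum>i\<in>UNIV. Pp i x + Pm i x))"
  proof
    fix x
    have "dr x = - 1/2 * (\<Sum>i\<in>UNIV. pd i (\<lambda>y. r y * bp y $ i) x + pd i (\<lambda>y. r y * bm y $ i) x)"
      using FP[of x] by linarith
    then have "dr x * (ln (r x) + 1) = - 1/2 * ((\<Sum>i\<in>UNIV. pd i (\<lambda>y. r y * bp y $ i) x + pd i (\<lambda>y. r y * bm y $ i) x) * (ln (r x) + 1))"
      by simp
    also have "\<dots> = - 1/2 * (\<Sum>i\<in>UNIV. Pp i x + Pm i x)"
      unfolding Pp_def Pm_def JP JM sum_distrib_right distrib_right ..
    finally show "dr x * (ln (r x) + 1) = - 1/2 * (\<Sum>i\<in>UNIV. Pp i x + Pm i x)" .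
  qed
  have iPp: "integrable lborel (Pp i)" for i unfolding Pp_def using BP(1) .
  have iPm: "integrable lborel (Pm i)" for i unfolding Pm_def using BM(1) .
  show "integrable lborel (\<lambda>x. dr x * (ln (r x) + 1))" unfolding eqd
    by (intro Bochner_Integration.integrable_mult_right Bochner_Integration.integrable_sum Bochner_Integration.integrable_add iPp iPm)
  have eqr: "(\<lambda>x. r x * ((\<Sum>i\<in>UNIV. pd i (\<lambda>y. bp y $ i) x) + (\<Sum>i\<in>UNIV. pd i (\<lambda>y. bm y $ i) x)))
     = (\<lambda>x. \<Sum>i\<in>UNIV. r x * pd i (\<lambda>y. bp y $ i) x + r x * pd i (\<lambda>y. bm y $ i) x)"
    by (auto simp: sum_distrib_left sum.distrib algebra_simps)
  show "integrable lborel (\<lambda>x. r x * ((\<Sum>i\<in>UNIV. pd i (\<lambda>y. bp y $ i) x) + (\<Sum>i\<in>UNIV. pd i (\<lambda>y. bm y $ i) x)))"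
    unfolding eqr by (intro Bochner_Integration.integrable_sum Bochner_Integration.integrable_add BP(2) BM(2))
  have "(\<integral>x. dr x * (ln (r x) + 1) \<partial>lborel) = - 1/2 * (\<Sum>i\<in>UNIV. integral\<^sup>L lborel (Pp i) + integral\<^sup>L lborel (Pm i))"
    unfolding eqd by (simp add: Bochner_Integration.integral_sum Bochner_Integration.integral_add
        Bochner_Integration.integrable_add iPp iPm)
  also have "\<dots> = - 1/2 * (\<Sum>i\<in>UNIV. (\<integral>x. r x * pd i (\<lambda>y. bp y $ i) x \<partial>lborel) + (\<integral>x. r x * pd i (\<lambda>y. bm y $ i) x \<partial>lborel))"
    unfolding Pp_def Pm_def BP(3) BM(3) ..
  also have "\<dots> = - 1/2 * (\<integral>x. r x * ((\<Sum>i\<in>UNIV. pd i (\<lambda>y. bp y $ i) x) + (\<Sum>i\<in>UNIV. pd i (\<lambda>y. bm y $ i) x)) \<partial>lborel)"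
    unfolding eqr by (simp add: Bochner_Integration.integral_sum Bochner_Integration.integral_add
        Bochner_Integration.integrable_add BP(2) BM(2))
  finally show "(\<integral>x. dr x * (ln (r x) + 1) \<partial>lborel)
       = - 1/2 * (\<integral>x. r x * ((\<Sum>i\<in>UNIV. pd i (\<lambda>y. bp y $ i) x) + (\<Sum>i\<in>UNIV. pd i (\<lambda>y. bm y $ i) x)) \<partial>lborel)" .
qed




lemma cont_slice_t:
  assumes "continuous_on (UNIV \<times> T) (\<lambda>(x, t). F x t)"
  shows "continuous_on T (\<lambda>t. F x t)"
proof -
  have "continuous_on T (\<lambda>t. (\<lambda>(x, t). F x t) (x, t))"
    by (rule continuous_on_compose2[OF assms]) (auto intro!: continuous_intros)
  then show ?thesis by simp
qed

lemma time_int: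
  fixes \<rho> dr :: "pt \<Rightarrow> real \<Rightarrow> real" and I :: "real \<Rightarrow> real" and g :: "pt \<Rightarrow> real" and ta tb :: real
  assumes tab: "ta < tb"
    and rc: "continuous_on (UNIV \<times> {ta..tb}) (\<lambda>(x, t). \<rho> x t)"
    and rpos: "\<And>x t. t \<in> {ta..tb} \<Longrightarrow> \<rho> x t > 0"
    and dr: "\<And>x s. s \<in> {ta..tb} \<Longrightarrow> ((\<lambda>s. \<rho> x s) has_real_derivative dr x s) (at s within {ta..tb})"
    and dc: "continuous_on (UNIV \<times> {ta..tb}) (\<lambda>(x, t). dr x t)"
    and g: "integrable lborel g"
    and b1: "\<And>x t. t \<in> {ta..tb} \<Longrightarrow> \<bar>\<rho> x t * ln (\<rho> x t)\<bar> \<le> g x"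
    and b2: "\<And>x t. t \<in> {ta..tb} \<Longrightarrow> \<bar>dr x t\<bar> * (1 + \<bar>ln (\<rho> x t)\<bar>) \<le> g x"
    and rate: "\<And>t. t \<in> {ta..tb} \<Longrightarrow> (\<integral>x. dr x t * (ln (\<rho> x t) + 1) \<partial>lborel) = - 1/2 * I t"
  shows "entropy_at \<rho> tb - entropy_at \<rho> ta = 1/2 * integral {ta..tb} I"
proof -
  let ?T = "{ta..tb}"
  define K where "K x t = dr x t * (ln (\<rho> x t) + 1)" for x t
  have Kc: "continuous_on (UNIV \<times> ?T) (\<lambda>(x, t). K x t)"
  proof -
    have "continuous_on (UNIV \<times> ?T) (\<lambda>z. dr (fst z) (snd z) * (ln (\<rho> (fst z) (snd z)) + 1))"
    proof (intro continuous_intros)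
      show "continuous_on (UNIV \<times> ?T) (\<lambda>z. dr (fst z) (snd z))" using dc by (simp add: case_prod_beta)
      show "continuous_on (UNIV \<times> ?T) (\<lambda>z. \<rho> (fst z) (snd z))" using rc by (simp add: case_prod_beta)
      show "\<forall>z\<in>UNIV \<times> ?T. \<rho> (fst z) (snd z) \<noteq> 0" using rpos by (auto simp: less_imp_neq[symmetric] intro: less_imp_neq[symmetric])
    qed
    then show ?thesis unfolding K_def by (simp add: case_prod_beta)
  qed
  have Kb: "\<bar>K x t\<bar> \<le> g x" if "t \<in> ?T" for x t
  proof -
    have "\<bar>K x t\<bar> \<le> \<bar>dr x t\<bar> * (1 + \<bar>ln (\<rho> x t)\<bar>)" unfolding K_def abs_mult
      by (rule mult_left_mono) auto
    then show ?thesis using b2[OF that, of x] by simp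
  qed
  define k where "k z = indicator (UNIV \<times> ?T) z *\<^sub>R (\<lambda>(x, t). K x t) z" for z :: "pt \<times> real"
  have kk: "k (x, t) = indicator ?T t * K x t" for x t
    unfolding k_def by (simp add: indicator_def)
  have km: "k \<in> borel_measurable (lborel \<Otimes>\<^sub>M lborel)"
  proof -
    have "k \<in> borel_measurable borel" unfolding k_def
      by (rule borel_measurable_continuous_on_indicator[OF _ Kc]) (simp add: closed_Times)
    then show ?thesis by (simp add: lborel_prod)
  qed
  have kslice: "integrable lborel (\<lambda>t. k (x, t))" for x
  proof -
    have "integrable lborel (\<lambda>t. indicator ?T t *\<^sub>R K x t)"
      by (rule borel_integrable_compact[OF compact_Icc cont_slice_t[OF Kc]])
    then show ?thesis by (simp add: kk)
  qed
  have kint: "integrable (lborel \<Otimes>\<^sub>M lborel) k"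
  proof (rule lborel_pair.Fubini_integrable[OF km])
    show "AE x in lborel. integrable lborel (\<lambda>t. k (x, t))" using kslice by simp
    show "integrable lborel (\<lambda>x. \<integral>t. norm (k (x, t)) \<partial>lborel)"
    proof (rule Bochner_Integration.integrable_bound[of _ "\<lambda>x. (tb - ta) * g x"])
      show "integrable lborel (\<lambda>x. (tb - ta) * g x)" using g by simp
      show "(\<lambda>x. \<integral>t. norm (k (x, t)) \<partial>lborel) \<in> borel_measurable lborel"
        using km by measurable
      show "AE x in lborel. norm (\<integral>t. norm (k (x, t)) \<partial>lborel) \<le> norm ((tb - ta) * g x)"
      proof (rule AE_I2)
        fix x
        have "(\<integral>t. norm (k (x, t)) \<partial>lborel) \<le> (\<integral>t. g x * indicator ?T t \<partial>lborel)"
        proof (rule integral_mono)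
          show "integrable lborel (\<lambda>t. norm (k (x, t)))" using kslice[of x] by simp
          show "integrable lborel (\<lambda>t. g x * indicator ?T t)"
            by (rule borel_integrable_atLeastAtMost) simp
          show "norm (k (x, t)) \<le> g x * indicator ?T t" for t
            using Kb[of t x] by (auto simp: kk indicator_def)
        qed
        also have "\<dots> = g x * (tb - ta)" using tab by simp
        finally have le: "(\<integral>t. norm (k (x, t)) \<partial>lborel) \<le> (tb - ta) * g x" by (simp add: mult.commute)
        have "0 \<le> (\<integral>t. norm (k (x, t)) \<partial>lborel)" by simp
        then show "norm (\<integral>t. norm (k (x, t)) \<partial>lborel) \<le> norm ((tb - ta) * g x)" using le by simp
      qed
    qed
  qed
  have Fub: "(\<integral>t. (\<integral>x. k (x, t) \<partial>lborel) \<partial>lborel) = (\<integral>x. (\<integral>t. k (x, t) \<partial>lborel) \<partial>lborel)"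
    using lborel_pair.Fubini_integral[of "\<lambda>x t. k (x, t)"] kint by simp
  have ftc: "(\<integral>t. k (x, t) \<partial>lborel) = \<rho> x tb * ln (\<rho> x tb) - \<rho> x ta * ln (\<rho> x ta)" for x
  proof -
    have der: "((\<lambda>s. \<rho> x s * ln (\<rho> x s)) has_vector_derivative K x s) (at s within {min ta tb..max ta tb})"
      if "min ta tb \<le> s" "s \<le> max ta tb" for s
    proof -
      have sT: "s \<in> ?T" using that tab by auto
      have "((\<lambda>s. \<rho> x s * ln (\<rho> x s)) has_real_derivative dr x s * ln (\<rho> x s) + \<rho> x s * (dr x s / \<rho> x s)) (at s within ?T)"
        using rpos[OF sT, of x] dr[OF sT, of x] by (auto intro!: derivative_eq_intros)
      moreover have "dr x s * ln (\<rho> x s) + \<rho> x s * (dr x s / \<rho> x s) = K x s"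
        unfolding K_def using rpos[OF sT, of x] by (simp add: field_simps)
      ultimately show ?thesis using tab by (simp add: has_real_derivative_iff_has_vector_derivative)
    qed
    have cK: "continuous_on {min ta tb..max ta tb} (K x)"
      using cont_slice_t[OF Kc, of x] tab by simp
    have "(LBINT s=ereal ta..ereal tb. K x s) = \<rho> x tb * ln (\<rho> x tb) - \<rho> x ta * ln (\<rho> x ta)"
      by (rule interval_integral_FTC_finite[OF cK der])
    then show ?thesis using tab unfolding interval_integral_Icc[OF less_imp_le[OF tab]] set_lebesgue_integral_def
      by (simp add: kk mult.commute)
  qed
  have hint: "integrable lborel (\<lambda>x. \<rho> x t * ln (\<rho> x t))" if "t \<in> ?T" for t
  proof (rule Bochner_Integration.integrable_bound[OF g])
    have rct: "continuous_on UNIV (\<lambda>x. \<rho> x t)" by (rule cont_slice[OF rc that])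
    have "continuous_on UNIV (\<lambda>x. \<rho> x t * ln (\<rho> x t))"
    proof (intro continuous_intros rct)
      show "\<forall>x\<in>UNIV. \<rho> x t \<noteq> 0" using rpos[OF that] by (metis less_irrefl)
    qed
    then show "(\<lambda>x. \<rho> x t * ln (\<rho> x t)) \<in> borel_measurable lborel"
      using borel_measurable_continuous_onI by simp
    show "AE x in lborel. norm (\<rho> x t * ln (\<rho> x t)) \<le> norm (g x)"
      using b1[OF that] by (auto intro!: AE_I2 order_trans[OF _ abs_ge_self])
  qed
  have lhs: "(\<integral>x. (\<integral>t. k (x, t) \<partial>lborel) \<partial>lborel) = - entropy_at \<rho> tb + entropy_at \<rho> ta"
    unfolding ftc entropy_at_def using hint[of ta] hint[of tb] tab by simp
  have inner: "(\<integral>x. k (x, t) \<partial>lborel) = indicator ?T t * (- 1/2 * I t)" for t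
    unfolding kk using rate[of t] by (cases "t \<in> ?T") (auto simp: K_def)
  have iI: "set_integrable lborel ?T I"
  proof -
    have "integrable lborel (\<lambda>t. \<integral>x. k (x, t) \<partial>lborel)"
      using lborel_pair.integrable_snd[of "\<lambda>x t. k (x, t)"] kint by simp
    then have i2: "integrable lborel (\<lambda>t. indicator ?T t * (- 1/2 * I t))"
      unfolding inner .
    have "integrable lborel (\<lambda>t. (-2) * (indicator ?T t * (- 1/2 * I t)))"
      by (rule Bochner_Integration.integrable_mult_right[OF i2])
    moreover have "(\<lambda>t. (-2) * (indicator ?T t * (- 1/2 * I t))) = (\<lambda>t. indicator ?T t *\<^sub>R I t)"
      by (auto simp: indicator_def)
    ultimately show ?thesis unfolding set_integrable_def by simp
  qed
  have "(\<integral>t. (\<integral>x. k (x, t) \<partial>lborel) \<partial>lborel) = - 1/2 * (LINT t:?T|lborel. I t)"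
    unfolding inner set_lebesgue_integral_def by (simp add: mult.commute mult.left_commute)
  also have "(LINT t:?T|lborel. I t) = integral ?T I" by (rule set_borel_integral_eq_integral(2)[OF iI])
  finally show ?thesis using Fub lhs by simp
qed




lemma extend_closed:
  fixes f :: "real \<Rightarrow> real"
  assumes c: "continuous_on {ta..tb} f" and tab: "ta < tb"
    and z: "\<And>t. ta < t \<Longrightarrow> t < tb \<Longrightarrow> f t = 0" and t: "t \<in> {ta..tb}"
  shows "f t = 0"
proof -
  have cl: "closed {s \<in> {ta..tb}. f s = 0}"
    by (rule continuous_closed_preimage_constant[OF c]) simp
  have "{ta<..<tb} \<subseteq> {s \<in> {ta..tb}. f s = 0}" using z by auto
  then have "closure {ta<..<tb} \<subseteq> {s \<in> {ta..tb}. f s = 0}"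
    using cl by (rule closure_minimal)
  then show ?thesis using t tab by auto
qed


theorem corollary1p1:
  fixes \<rho> :: "pt \<Rightarrow> real \<Rightarrow> real"
    and p :: "real \<Rightarrow> pt \<Rightarrow> real \<Rightarrow> pt \<Rightarrow> real"
    and bp bm :: "pt \<Rightarrow> real \<Rightarrow> pt"
    and \<nu> ta tb :: real
  assumes nu: "\<nu> > 0"
    and tab: "ta < tb"
    \<comment> \<open>rho(.,t) is a positive probability density of xi(t)\<close>
    and rho_pos: "\<forall>t\<in>{ta..tb}. \<forall>x. \<rho> x t > 0"
    and rho_int: "\<forall>t\<in>{ta..tb}. integrable lborel (\<lambda>x. \<rho> x t) \<and> (\<integral>x. \<rho> x t \<partial>lborel) = 1"
    \<comment> \<open>Markov transition densities, consistent with rho (Chapman-Kolmogorov)\<close>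
    and p_meas: "\<forall>s t. ta \<le> s \<and> s < t \<and> t \<le> tb \<longrightarrow>
                    (\<lambda>z. p s (fst z) t (snd z)) \<in> borel_measurable borel"
    and p_dens: "\<forall>s t x. ta \<le> s \<and> s < t \<and> t \<le> tb \<longrightarrow>
                    (\<forall>y. p s x t y \<ge> 0) \<and> integrable lborel (p s x t) \<and> (\<integral>y. p s x t y \<partial>lborel) = 1"
    and p_rho: "\<forall>s t y. ta \<le> s \<and> s < t \<and> t \<le> tb \<longrightarrow>
                    \<rho> y t = (\<integral>x. \<rho> x s * p s x t y \<partial>lborel)"
    and p_CK: "\<forall>s t u x z. ta \<le> s \<and> s < t \<and> t < u \<and> u \<le> tb \<longrightarrow>
                    p s x u z = (\<integral>y. p s x t y * p t y u z \<partial>lborel)"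
    \<comment> \<open>mean forward / backward derivatives (limits in L^1, as in Nelson's definition)\<close>
    and Dplus: "\<forall>f. test_fun {ta..tb} f \<longrightarrow> (\<forall>t\<in>{ta..<tb}.
                 ((\<lambda>dt. \<integral>\<^sup>+x. ennreal (\<rho> x t *
                     \<bar>(condF p f t dt x - f x t) / dt - gen {ta..tb} 1 \<nu> bp f x t\<bar>) \<partial>lborel)
                   \<longlongrightarrow> 0) (at_right 0))"
    and Dminus: "\<forall>f. test_fun {ta..tb} f \<longrightarrow> (\<forall>t\<in>{ta<..tb}.
                 ((\<lambda>dt. \<integral>\<^sup>+x. ennreal (\<rho> x t *
                     \<bar>(f x t - condB \<rho> p f t dt x) / dt - gen {ta..tb} (-1) \<nu> bm f x t\<bar>) \<partial>lborel)
                   \<longlongrightarrow> 0) (at_right 0))"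
    \<comment> \<open>the identity b_+ - b_- = 2 nu grad ln rho\<close>
    and bdiff: "\<forall>t\<in>{ta..tb}. \<forall>x i. bp x t $ i - bm x t $ i = 2 * \<nu> * pd i (\<lambda>y. ln (\<rho> y t)) x"
    \<comment> \<open>smoothness\<close>
    and rho_smooth: "C21 {ta..tb} \<rho>"
    and bp_smooth: "\<forall>i. C1x {ta..tb} (\<lambda>x t. bp x t $ i)"
    and bm_smooth: "\<forall>i. C1x {ta..tb} (\<lambda>x t. bm x t $ i)"
    \<comment> \<open>decay: every quantity entering the integrations by parts is dominated,
        uniformly in t, by one integrable function\<close>
    and decay: "\<exists>g. integrable lborel g \<and> (\<forall>t\<in>{ta..tb}. \<forall>x.
          \<bar>\<rho> x t * ln (\<rho> x t)\<bar> \<le> g x \<and>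
          \<bar>tder {ta..tb} \<rho> x t\<bar> * (1 + \<bar>ln (\<rho> x t)\<bar>) \<le> g x \<and>
          (\<forall>b\<in>{bp, bm}. \<forall>i.
             \<bar>\<rho> x t * b x t $ i\<bar> * (1 + \<bar>ln (\<rho> x t)\<bar>) \<le> g x \<and>
             \<bar>pd i (\<lambda>y. \<rho> y t) x * b x t $ i + \<rho> x t * pd i (\<lambda>y. b y t $ i) x\<bar>
                * (1 + \<bar>ln (\<rho> x t)\<bar>) \<le> g x \<and>
             \<bar>b x t $ i * pd i (\<lambda>y. \<rho> y t) x\<bar> \<le> g x))"
  shows "mesh_limit ta tb (\<lambda>n ts. rel_ent n (rho_plus \<rho> p n ts) (rho_minus \<rho> p n ts))
           (entropy_at \<rho> tb - entropy_at \<rho> ta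
             - 1/2 * integral {ta..tb} (\<lambda>t. \<integral>x. \<rho> x t * (divg bp x t + divg bm x t) \<partial>lborel))
       \<and> mesh_limit ta tb (\<lambda>n ts. rel_ent n (rho_minus \<rho> p n ts) (rho_plus \<rho> p n ts))
           (entropy_at \<rho> ta - entropy_at \<rho> tb
             + 1/2 * integral {ta..tb} (\<lambda>t. \<integral>x. \<rho> x t * (divg bp x t + divg bm x t) \<partial>lborel))"

proof -
  let ?T = "{ta..tb}"
  have rc: "continuous_on (UNIV \<times> ?T) (\<lambda>(x, t). \<rho> x t)"
    and rdif: "\<And>t x. t \<in> ?T \<Longrightarrow> (\<lambda>y. \<rho> y t) differentiable (at x)"
    and rpdc: "\<And>i. continuous_on (UNIV \<times> ?T) (\<lambda>(x, t). pd i (\<lambda>y. \<rho> y t) x)"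
    and rex: "\<And>x t. t \<in> ?T \<Longrightarrow> \<exists>d. ((\<lambda>s. \<rho> x s) has_real_derivative d) (at t within ?T)"
    and dc: "continuous_on (UNIV \<times> ?T) (\<lambda>(x, t). tder ?T \<rho> x t)"
    using rho_smooth unfolding C21_def C1x_def by blast+
  have dr: "((\<lambda>s. \<rho> x s) has_real_derivative tder ?T \<rho> x s) (at s within ?T)" if "s \<in> ?T" for x s
    by (rule tder_works[OF rex[OF that]])
  have bpc: "\<And>i. continuous_on (UNIV \<times> ?T) (\<lambda>(x, t). bp x t $ i)"
    and bpdif: "\<And>i t x. t \<in> ?T \<Longrightarrow> (\<lambda>y. bp y t $ i) differentiable (at x)"
    and bppdc: "\<And>i j. continuous_on (UNIV \<times> ?T) (\<lambda>(x, t). pd j (\<lambda>y. bp y t $ i) x)"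
    using bp_smooth unfolding C1x_def by blast+
  have bmc: "\<And>i. continuous_on (UNIV \<times> ?T) (\<lambda>(x, t). bm x t $ i)"
    and bmdif: "\<And>i t x. t \<in> ?T \<Longrightarrow> (\<lambda>y. bm y t $ i) differentiable (at x)"
    and bmpdc: "\<And>i j. continuous_on (UNIV \<times> ?T) (\<lambda>(x, t). pd j (\<lambda>y. bm y t $ i) x)"
    using bm_smooth unfolding C1x_def by blast+
  have rpos: "\<rho> x t > 0" if "t \<in> ?T" for x t using rho_pos that by blast
  have FPo: "tder ?T \<rho> x t + 1/2 * (\<Sum>i\<in>UNIV. pd i (\<lambda>y. \<rho> y t * bp y t $ i) x + pd i (\<lambda>y. \<rho> y t * bm y t $ i) x) = 0"
    if tt: "ta < t" "t < tb" for x t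
  proof -
    have tT: "t \<in> ?T" using tt by simp
    show ?thesis
    proof (rule FP_at[where r="\<lambda>x. \<rho> x t" and dr="\<lambda>x. tder ?T \<rho> x t" and bp="\<lambda>x. bp x t" and bm="\<lambda>x. bm x t" and \<nu>=\<nu>])
      fix x0 :: pt and d :: real assume d: "d > 0"
      have tf: "test_fun ?T (\<lambda>x t. bump x0 d x)" by (rule test_fun_bump[OF tab])
      have t1: "t \<in> {ta..<tb}" using tt by simp
      have t2: "t \<in> {ta<..tb}" using tt by simp
      note Dp = Dplus[rule_format, OF tf t1]
      note Dm = Dminus[rule_format, OF tf t2]
      show "(\<integral>x. \<rho> x t * ((\<Sum>i\<in>UNIV. bp x t $ i * bump1 x0 d i x) + \<nu> * (\<Sum>i\<in>UNIV. bump2 x0 d i i x)) \<partial>lborel)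
          = (\<integral>x. tder ?T \<rho> x t * bump x0 d x \<partial>lborel)"
        by (rule weak_plus[OF tab _ _ d rho_pos rho_int p_meas p_dens p_rho Dp rc dr dc bpc]) (use tt in auto)
      show "(\<integral>x. \<rho> x t * ((\<Sum>i\<in>UNIV. bm x t $ i * bump1 x0 d i x) - \<nu> * (\<Sum>i\<in>UNIV. bump2 x0 d i i x)) \<partial>lborel)
          = (\<integral>x. tder ?T \<rho> x t * bump x0 d x \<partial>lborel)"
        by (rule weak_minus[OF tab _ _ d rho_pos rho_int p_meas p_dens Dm rc dr dc bmc]) (use tt in auto)
    next
      show "(\<lambda>x. \<rho> x t) differentiable (at x)" for x by (rule rdif[OF tT])
      show "(\<lambda>y. bp y t $ i) differentiable (at x)" for i x by (rule bpdif[OF tT])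
      show "(\<lambda>y. bm y t $ i) differentiable (at x)" for i x by (rule bmdif[OF tT])
      show "continuous_on UNIV (pd i (\<lambda>x. \<rho> x t))" for i using cont_slice[OF rpdc tT] by simp
      show "continuous_on UNIV (pd i (\<lambda>y. bp y t $ i))" for i using cont_slice[OF bppdc tT] by simp
      show "continuous_on UNIV (pd i (\<lambda>y. bm y t $ i))" for i using cont_slice[OF bmpdc tT] by simp
      show "continuous_on UNIV (\<lambda>x. tder ?T \<rho> x t)" by (rule cont_slice[OF dc tT])
    qed
  qed
  have pJp: "pd i (\<lambda>y. \<rho> y t * bp y t $ i) x = pd i (\<lambda>y. \<rho> y t) x * bp x t $ i + \<rho> x t * pd i (\<lambda>y. bp y t $ i) x"
    if "t \<in> ?T" for i t x using pd_mult[OF rdif[OF that] bpdif[OF that]] by simp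
  have pJm: "pd i (\<lambda>y. \<rho> y t * bm y t $ i) x = pd i (\<lambda>y. \<rho> y t) x * bm x t $ i + \<rho> x t * pd i (\<lambda>y. bm y t $ i) x"
    if "t \<in> ?T" for i t x using pd_mult[OF rdif[OF that] bmdif[OF that]] by simp
  have FPc: "tder ?T \<rho> x t + 1/2 * (\<Sum>i\<in>UNIV. pd i (\<lambda>y. \<rho> y t * bp y t $ i) x + pd i (\<lambda>y. \<rho> y t * bm y t $ i) x) = 0"
    if tT: "t \<in> ?T" for x t
  proof -
    define E where "E t = tder ?T \<rho> x t + 1/2 * (\<Sum>i\<in>UNIV. (pd i (\<lambda>y. \<rho> y t) x * bp x t $ i + \<rho> x t * pd i (\<lambda>y. bp y t $ i) x)
        + (pd i (\<lambda>y. \<rho> y t) x * bm x t $ i + \<rho> x t * pd i (\<lambda>y. bm y t $ i) x))" for t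
    have Ec: "continuous_on ?T E" unfolding E_def
      by (intro continuous_intros cont_slice_t[OF dc] cont_slice_t[OF rpdc] cont_slice_t[OF bpc]
          cont_slice_t[OF bmc] cont_slice_t[OF rc] cont_slice_t[OF bppdc] cont_slice_t[OF bmpdc])
    have "E s = 0" if "ta < s" "s < tb" for s
      using FPo[OF that, of x] that unfolding E_def by (simp add: pJp pJm)
    then have "E t = 0" by (rule extend_closed[OF Ec tab _ tT])
    then show ?thesis unfolding E_def using tT by (simp add: pJp pJm)
  qed
  obtain g where gi: "integrable lborel g" and gb: "\<forall>t\<in>?T. \<forall>x.
          \<bar>\<rho> x t * ln (\<rho> x t)\<bar> \<le> g x \<and>
          \<bar>tder ?T \<rho> x t\<bar> * (1 + \<bar>ln (\<rho> x t)\<bar>) \<le> g x \<and>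
          (\<forall>b\<in>{bp, bm}. \<forall>i.
             \<bar>\<rho> x t * b x t $ i\<bar> * (1 + \<bar>ln (\<rho> x t)\<bar>) \<le> g x \<and>
             \<bar>pd i (\<lambda>y. \<rho> y t) x * b x t $ i + \<rho> x t * pd i (\<lambda>y. b y t $ i) x\<bar>
                * (1 + \<bar>ln (\<rho> x t)\<bar>) \<le> g x \<and>
             \<bar>b x t $ i * pd i (\<lambda>y. \<rho> y t) x\<bar> \<le> g x)"
    using decay by blast
  have g1: "\<bar>\<rho> x t * ln (\<rho> x t)\<bar> \<le> g x" if "t \<in> ?T" for x t using gb that by blast
  have g2: "\<bar>tder ?T \<rho> x t\<bar> * (1 + \<bar>ln (\<rho> x t)\<bar>) \<le> g x" if "t \<in> ?T" for x t using gb that by blast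
  have gB: "\<bar>\<rho> x t * b x t $ i\<bar> * (1 + \<bar>ln (\<rho> x t)\<bar>) \<le> g x \<and>
             \<bar>pd i (\<lambda>y. \<rho> y t) x * b x t $ i + \<rho> x t * pd i (\<lambda>y. b y t $ i) x\<bar>
                * (1 + \<bar>ln (\<rho> x t)\<bar>) \<le> g x \<and>
             \<bar>b x t $ i * pd i (\<lambda>y. \<rho> y t) x\<bar> \<le> g x"
    if "t \<in> ?T" "b \<in> {bp, bm}" for x t b i
  proof -
    have "\<forall>b\<in>{bp, bm}. \<forall>i.
             \<bar>\<rho> x t * b x t $ i\<bar> * (1 + \<bar>ln (\<rho> x t)\<bar>) \<le> g x \<and>
             \<bar>pd i (\<lambda>y. \<rho> y t) x * b x t $ i + \<rho> x t * pd i (\<lambda>y. b y t $ i) x\<bar>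
                * (1 + \<bar>ln (\<rho> x t)\<bar>) \<le> g x \<and>
             \<bar>b x t $ i * pd i (\<lambda>y. \<rho> y t) x\<bar> \<le> g x"
      using gb that(1) by blast
    then show ?thesis using that(2) by blast
  qed
  define I where "I t = (\<integral>x. \<rho> x t * (divg bp x t + divg bm x t) \<partial>lborel)" for t
  have rate: "(\<integral>x. tder ?T \<rho> x t * (ln (\<rho> x t) + 1) \<partial>lborel) = - 1/2 * I t" if tT: "t \<in> ?T" for t
  proof -
    have bp_in: "bp \<in> {bp, bm}" and bm_in: "bm \<in> {bp, bm}" by auto
    have "(\<integral>x. tder ?T \<rho> x t * (ln (\<rho> x t) + 1) \<partial>lborel)
       = - 1/2 * (\<integral>x. \<rho> x t * ((\<Sum>i\<in>UNIV. pd i (\<lambda>y. bp y t $ i) x) + (\<Sum>i\<in>UNIV. pd i (\<lambda>y. bm y t $ i) x)) \<partial>lborel)"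
    proof (rule ent_rate(3)[where r="\<lambda>x. \<rho> x t" and dr="\<lambda>x. tder ?T \<rho> x t" and bp="\<lambda>x. bp x t" and bm="\<lambda>x. bm x t" and g=g])
      show "tder ?T \<rho> x t + 1/2 * (\<Sum>i\<in>UNIV. pd i (\<lambda>y. \<rho> y t * bp y t $ i) x + pd i (\<lambda>y. \<rho> y t * bm y t $ i) x) = 0" for x
        by (rule FPc[OF tT])
      show "(\<lambda>x. \<rho> x t) differentiable (at x)" for x by (rule rdif[OF tT])
      show "0 < \<rho> x t" for x by (rule rpos[OF tT])
      show "(\<lambda>y. bp y t $ i) differentiable (at x)" for i x by (rule bpdif[OF tT])
      show "(\<lambda>y. bm y t $ i) differentiable (at x)" for i x by (rule bmdif[OF tT])
      show "continuous_on UNIV (pd i (\<lambda>x. \<rho> x t))" for i using cont_slice[OF rpdc tT] by simp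
      show "continuous_on UNIV (pd i (\<lambda>y. bp y t $ i))" for i using cont_slice[OF bppdc tT] by simp
      show "continuous_on UNIV (pd i (\<lambda>y. bm y t $ i))" for i using cont_slice[OF bmpdc tT] by simp
      show "integrable lborel g" by (rule gi)
      show "\<bar>\<rho> x t * bp x t $ i\<bar> * (1 + \<bar>ln (\<rho> x t)\<bar>) \<le> g x" for x i using gB[OF tT bp_in] by blast
      show "\<bar>pd i (\<lambda>x. \<rho> x t) x * bp x t $ i + \<rho> x t * pd i (\<lambda>y. bp y t $ i) x\<bar> * (1 + \<bar>ln (\<rho> x t)\<bar>) \<le> g x" for x i
        using gB[OF tT bp_in] by blast
      show "\<bar>bp x t $ i * pd i (\<lambda>x. \<rho> x t) x\<bar> \<le> g x" for x i using gB[OF tT bp_in] by blast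
      show "\<bar>\<rho> x t * bm x t $ i\<bar> * (1 + \<bar>ln (\<rho> x t)\<bar>) \<le> g x" for x i using gB[OF tT bm_in] by blast
      show "\<bar>pd i (\<lambda>x. \<rho> x t) x * bm x t $ i + \<rho> x t * pd i (\<lambda>y. bm y t $ i) x\<bar> * (1 + \<bar>ln (\<rho> x t)\<bar>) \<le> g x" for x i
        using gB[OF tT bm_in] by blast
      show "\<bar>bm x t $ i * pd i (\<lambda>x. \<rho> x t) x\<bar> \<le> g x" for x i using gB[OF tT bm_in] by blast
    qed
    then show ?thesis unfolding I_def divg_def .
  qed
  have key: "entropy_at \<rho> tb - entropy_at \<rho> ta = 1/2 * integral ?T I"
    by (rule time_int[OF tab rc _ dr dc gi g1 g2 rate]) (auto intro: rpos)
  have z1: "rel_ent n (rho_plus \<rho> p n ts) (rho_minus \<rho> p n ts) = 0"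
    and z2: "rel_ent n (rho_minus \<rho> p n ts) (rho_plus \<rho> p n ts) = 0"
    if "is_partition ta tb n ts" for n ts
  proof -
    have eq: "rho_minus \<rho> p n ts = rho_plus \<rho> p n ts"
      by (rule ext) (rule rho_plus_minus[OF that rho_pos])
    show "rel_ent n (rho_plus \<rho> p n ts) (rho_minus \<rho> p n ts) = 0" unfolding eq by (rule rel_ent_self)
    show "rel_ent n (rho_minus \<rho> p n ts) (rho_plus \<rho> p n ts) = 0" unfolding eq by (rule rel_ent_self)
  qed
  have L1: "entropy_at \<rho> tb - entropy_at \<rho> ta - 1/2 * integral ?T I = 0" using key by simp
  have L2: "entropy_at \<rho> ta - entropy_at \<rho> tb + 1/2 * integral ?T I = 0" using key by simp
  show ?thesis unfolding I_def[symmetric] L1 L2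
    using mesh_limit_zero[of ta tb "\<lambda>n ts. rel_ent n (rho_plus \<rho> p n ts) (rho_minus \<rho> p n ts)"]
      mesh_limit_zero[of ta tb "\<lambda>n ts. rel_ent n (rho_minus \<rho> p n ts) (rho_plus \<rho> p n ts)"] z1 z2
    by blast
qed


end
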